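(* Let $m\ge2$, $q\ge 2$ be integers, let $\Omega$ be a nonempty closed subset of $\Sigma_m$ and $\mu$ a Borel probability measure on $\Omega$. Let $\mathbb{P}_\mu$ be the Borel probability measure on $\Sigma_m$ (supported on $X_\Omega$) determined on cylinders by $$\mathbb{P}_\mu[u] := \prod_{i\le |u|,\ q\nmid i} \mu[u|J_i],$$ and let $$s(\Omega,\mu) := (q-1)^2\sum_{k=1}^\infty \frac{H_m^\mu(\alpha_k)}{q^{k+1}}.$$ Then for $\mathbb{P}_\mu$-a.e. $x\in X_\Omega$, $$\lim_{n\to\infty}\frac{-\log_m \mathbb{P}_\mu[x_1^n]}{n} = s(\Omega,\mu).$$ Consequently $\dim_H(\mathbb{P}_\mu)=s(\Omega,\mu)$ and $\dim_H(X_\Omega)\ge s(\Omega,\mu)$.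
   Context: $\Sigma_m=\{0,\dots,m-1\}^{\mathbb N}$ with metric $\varrho((x_k),(y_k)) = m^{-\min\{n:\ x_n\ne y_n\}+1}$. $X_\Omega := \{x\in\Sigma_m:\ (x_{iq^\ell})_{\ell\ge0}\in\Omega \text{ for all } i\ge1,\ q\nmid i\}$. For a finite word $u$, $[u]$ is the cylinder of sequences beginning with $u$; $x_1^n=x_1\cdots x_n$. For $q\nmid i$, $J_i=\{q^r i\}_{r\ge 0}$, and for a word $u$ of length $|u|\ge i$, $u|J_i = u_iu_{qi}\cdots u_{q^ri}$ where $q^ri\le|u|<q^{r+1}i$. $\alpha_k=\{\Omega\cap[u]:\ u\in\{0,\dots,m-1\}^k,\ \Omega\cap[u]\ne\emptyset\}$, and $H_m^\mu(\alpha)=-\sum_{C\in\alpha}\mu(C)\log_m\mu(C)$. The Hausdorff dimension of a measure is $\dim_H(\mathbb{P})=\inf\{\dim_H F:\ F \text{ Borel},\ \mathbb{P}(F)=1\}$. *)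

theory Defs
  imports "HOL-Probability.Probability"
begin

text \<open>Points of the full shift are sequences indexed from 1: x_1, x_2, ...
  Represented as functions nat => nat with the dummy value x 0 = 0.
  Finite words u = u_1 ... u_k are lists, u_j = u ! (j - 1).\<close>

definition Sigma_sh :: "nat \<Rightarrow> (nat \<Rightarrow> nat) set" where
  "Sigma_sh m = {x. x 0 = 0 \<and> (\<forall>n. x n < m)}"

definition rho :: "nat \<Rightarrow> (nat \<Rightarrow> nat) \<Rightarrow> (nat \<Rightarrow> nat) \<Rightarrow> real" where
  "rho m x y = (if x = y then 0
     else real m powr (- real (LEAST n. x n \<noteq> y n) + 1))"

definition Sopen :: "nat \<Rightarrow> (nat \<Rightarrow> nat) set \<Rightarrow> bool" where
  "Sopen m U \<longleftrightarrow> U \<subseteq> Sigma_sh m \<and>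
     (\<forall>x\<in>U. \<exists>e>0. \<forall>y\<in>Sigma_sh m. rho m x y < e \<longrightarrow> y \<in> U)"

definition Sclosed :: "nat \<Rightarrow> (nat \<Rightarrow> nat) set \<Rightarrow> bool" where
  "Sclosed m F \<longleftrightarrow> F \<subseteq> Sigma_sh m \<and> Sopen m (Sigma_sh m - F)"

definition borel_Sigma :: "nat \<Rightarrow> (nat \<Rightarrow> nat) measure" where
  "borel_Sigma m = sigma (Sigma_sh m) {U. Sopen m U}"

definition cyl :: "nat \<Rightarrow> nat list \<Rightarrow> (nat \<Rightarrow> nat) set" where
  "cyl m u = {x \<in> Sigma_sh m. \<forall>j\<in>{1..length u}. x j = u ! (j - 1)}"

definition words :: "nat \<Rightarrow> nat \<Rightarrow> nat list set" where
  "words m k = {u. length u = k \<and> (\<forall>a\<in>set u. a < m)}"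

definition prefix_word :: "(nat \<Rightarrow> nat) \<Rightarrow> nat \<Rightarrow> nat list" where
  "prefix_word x n = map x [1..<n+1]"

text \<open>u|J_i = u_i u_{qi} ... u_{q^r i} with q^r i <= |u| < q^(r+1) i (for q >= 2, r <= |u|).\<close>
definition restrJ :: "nat \<Rightarrow> nat \<Rightarrow> nat list \<Rightarrow> nat list" where
  "restrJ q i u = map (\<lambda>r. u ! (q ^ r * i - 1))
      (filter (\<lambda>r. q ^ r * i \<le> length u) [0..<length u + 1])"

definition X_Omega :: "nat \<Rightarrow> nat \<Rightarrow> (nat \<Rightarrow> nat) set \<Rightarrow> (nat \<Rightarrow> nat) set" where
  "X_Omega m q \<Omega> = {x \<in> Sigma_sh m. \<forall>i\<ge>1. \<not> q dvd i \<longrightarrow>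
      (\<lambda>l. if l = 0 then 0 else x (i * q ^ (l - 1))) \<in> \<Omega>}"

definition alpha :: "nat \<Rightarrow> (nat \<Rightarrow> nat) set \<Rightarrow> nat \<Rightarrow> (nat \<Rightarrow> nat) set set" where
  "alpha m \<Omega> k = {\<Omega> \<inter> cyl m u | u. u \<in> words m k \<and> \<Omega> \<inter> cyl m u \<noteq> {}}"

definition entropy_m :: "nat \<Rightarrow> (nat \<Rightarrow> nat) measure \<Rightarrow> (nat \<Rightarrow> nat) set set \<Rightarrow> real" where
  "entropy_m m \<mu> \<A> = - (\<Sum>C\<in>\<A>. (if measure \<mu> C = 0 then 0
       else measure \<mu> C * log (real m) (measure \<mu> C)))"

definition s_val :: "nat \<Rightarrow> nat \<Rightarrow> (nat \<Rightarrow> nat) set \<Rightarrow> (nat \<Rightarrow> nat) measure \<Rightarrow> real" where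
  "s_val m q \<Omega> \<mu> = (real q - 1)^2 *
     (\<Sum>k. entropy_m m \<mu> (alpha m \<Omega> (k + 1)) / real q ^ (k + 2))"

definition sdiam :: "nat \<Rightarrow> (nat \<Rightarrow> nat) set \<Rightarrow> real" where
  "sdiam m A = (if A = {} then 0 else Sup {rho m x y | x y. x \<in> A \<and> y \<in> A})"

definition hmeasure :: "nat \<Rightarrow> real \<Rightarrow> (nat \<Rightarrow> nat) set \<Rightarrow> ennreal" where
  "hmeasure m s F = (SUP \<delta>\<in>{0<..}.
     INF U \<in> {U :: nat \<Rightarrow> (nat \<Rightarrow> nat) set. F \<subseteq> (\<Union>i. U i) \<and> (\<forall>i. sdiam m (U i) \<le> \<delta>)}.
       (\<Sum>i. ennreal (sdiam m (U i) powr s)))"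

definition dimH :: "nat \<Rightarrow> (nat \<Rightarrow> nat) set \<Rightarrow> real" where
  "dimH m F = Inf {s. s > 0 \<and> hmeasure m s F = 0}"

definition dimH_measure :: "nat \<Rightarrow> (nat \<Rightarrow> nat) measure \<Rightarrow> real" where
  "dimH_measure m P = Inf {dimH m F | F. F \<in> sets (borel_Sigma m) \<and> emeasure P F = 1}"

end

theory Submission
  imports Defs
begin

lemma space_borel_Sigma[simp]: "space (borel_Sigma m) = Sigma_sh m"
  unfolding borel_Sigma_def by (rule space_measure_of_conv)

lemma sets_borel_Sigma: "sets (borel_Sigma m) = sigma_sets (Sigma_sh m) {U. Sopen m U}"
  unfolding borel_Sigma_def by (rule sets_measure_of) (auto simp: Sopen_def)

lemma Sopen_in_sets: "Sopen m U \<Longrightarrow> U \<in> sets (borel_Sigma m)"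
  unfolding sets_borel_Sigma by auto

lemma rho_eq:
  assumes "x \<in> Sigma_sh m" "y \<in> Sigma_sh m" "x \<noteq> y"
  shows "rho m x y = real m powr (1 - real (LEAST n. x n \<noteq> y n))"
    "(LEAST n. x n \<noteq> y n) \<ge> 1" "x (LEAST n. x n \<noteq> y n) \<noteq> y (LEAST n. x n \<noteq> y n)"
    "\<And>j. j < (LEAST n. x n \<noteq> y n) \<Longrightarrow> x j = y j"
proof -
  have ex: "\<exists>n. x n \<noteq> y n" using assms(3) by auto
  show "rho m x y = real m powr (1 - real (LEAST n. x n \<noteq> y n))"
    using assms(3) unfolding rho_def by simp
  show "x (LEAST n. x n \<noteq> y n) \<noteq> y (LEAST n. x n \<noteq> y n)" using ex by (rule LeastI_ex)
  moreover have "x 0 = y 0" using assms by (simp add: Sigma_sh_def)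
  ultimately show "(LEAST n. x n \<noteq> y n) \<ge> 1"
    by (metis less_one linorder_not_le)
  show "\<And>j. j < (LEAST n. x n \<noteq> y n) \<Longrightarrow> x j = y j" using not_less_Least by blast
qed

lemma rho_nonneg: "m \<ge> 2 \<Longrightarrow> rho m x y \<ge> 0"
  unfolding rho_def by auto

lemma rho_le_m: "m \<ge> 2 \<Longrightarrow> rho m x y \<le> real m"
proof -
  assume m: "m \<ge> 2"
  have "real m powr (- real (LEAST n. x n \<noteq> y n) + 1) \<le> real m powr 1"
    by (rule powr_mono) (use m in auto)
  thus ?thesis unfolding rho_def using m by auto
qed

lemma rho_agree_le:
  assumes m: "m \<ge> 2" and x: "x \<in> Sigma_sh m" and y: "y \<in> Sigma_sh m"
    and ag: "\<forall>j\<in>{1..n}. x j = y j"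
  shows "rho m x y \<le> real m powr (- real n)"
proof (cases "x = y")
  case True thus ?thesis by (simp add: rho_def)
next
  case False
  note r = rho_eq[OF x y False]
  define L where "L = (LEAST n. x n \<noteq> y n)"
  have "L > n"
  proof (rule ccontr)
    assume "\<not> n < L"
    hence "L \<le> n" by simp
    moreover have "1 \<le> L" using r(2) by (simp add: L_def)
    ultimately have "L \<in> {1..n}" by simp
    hence "x L = y L" using ag by blast
    thus False using r(3) by (simp add: L_def)
  qed
  hence "1 - real L \<le> - real n" by simp
  hence "real m powr (1 - real L) \<le> real m powr (- real n)"
    by (rule powr_mono) (use m in auto)
  thus ?thesis using r(1) by (simp add: L_def)
qed

lemma rho_small_agree:
  assumes m: "m \<ge> 2" and x: "x \<in> Sigma_sh m" and y: "y \<in> Sigma_sh m"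
    and small: "rho m x y < real m powr (1 - real n)"
  shows "\<forall>j\<in>{1..n}. x j = y j"
proof (cases "x = y")
  case True thus ?thesis by simp
next
  case False
  note r = rho_eq[OF x y False]
  define L where "L = (LEAST n. x n \<noteq> y n)"
  have "L > n"
  proof (rule ccontr)
    assume "\<not> n < L"
    hence "1 - real n \<le> 1 - real L" by simp
    hence "real m powr (1 - real n) \<le> real m powr (1 - real L)"
      by (rule powr_mono) (use m in auto)
    moreover have "rho m x y = real m powr (1 - real L)" using r(1) unfolding L_def .
    ultimately show False using small by linarith
  qed
  show ?thesis
  proof
    fix j assume "j \<in> {1..n}"
    hence "j < L" using \<open>L > n\<close> by simp
    thus "x j = y j" using r(4)[of j] unfolding L_def by blast
  qed
qed

lemma cyl_subset: "cyl m u \<subseteq> Sigma_sh m" by (auto simp: cyl_def)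

lemma Sopen_cyl:
  assumes m: "m \<ge> 2" shows "Sopen m (cyl m u)"
  unfolding Sopen_def
proof (intro conjI ballI)
  show "cyl m u \<subseteq> Sigma_sh m" by (rule cyl_subset)
  fix x assume x: "x \<in> cyl m u"
  show "\<exists>e>0. \<forall>y\<in>Sigma_sh m. rho m x y < e \<longrightarrow> y \<in> cyl m u"
  proof (intro exI[of _ "real m powr (1 - real (length u))"] conjI ballI impI)
    show "0 < real m powr (1 - real (length u))" using m by simp
    fix y assume y: "y \<in> Sigma_sh m" and r: "rho m x y < real m powr (1 - real (length u))"
    from rho_small_agree[OF m cyl_subset[THEN subsetD, OF x] y r] x have "\<forall>j\<in>{1..length u}. x j = y j"
      by (auto simp: cyl_def)
    thus "y \<in> cyl m u" using x y by (auto simp: cyl_def)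
  qed
qed

lemma cyl_sets: "m \<ge> 2 \<Longrightarrow> cyl m u \<in> sets (borel_Sigma m)"
  by (rule Sopen_in_sets[OF Sopen_cyl])

lemma prefix_word_len[simp]: "length (prefix_word x n) = n"
  by (simp add: prefix_word_def)

lemma prefix_word_nth: "j < n \<Longrightarrow> prefix_word x n ! j = x (j + 1)"
  by (simp add: prefix_word_def del: upt_Suc)

lemma prefix_in_words: "x \<in> Sigma_sh m \<Longrightarrow> prefix_word x n \<in> words m n"
  by (auto simp: words_def prefix_word_def Sigma_sh_def)

lemma in_cyl_prefix: "x \<in> Sigma_sh m \<Longrightarrow> x \<in> cyl m (prefix_word x n)"
  by (auto simp: cyl_def prefix_word_nth)

lemma cyl_iff_prefix: "x \<in> cyl m u \<longleftrightarrow> x \<in> Sigma_sh m \<and> prefix_word x (length u) = u"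
proof
  assume a: "x \<in> cyl m u"
  have "prefix_word x (length u) = u"
  proof (rule nth_equalityI)
    show "length (prefix_word x (length u)) = length u" by simp
    fix i assume i: "i < length (prefix_word x (length u))"
    hence "i + 1 \<in> {1..length u}" by simp
    hence "x (i + 1) = u ! (i + 1 - 1)" using a unfolding cyl_def by blast
    thus "prefix_word x (length u) ! i = u ! i" using i by (simp add: prefix_word_nth)
  qed
  thus "x \<in> Sigma_sh m \<and> prefix_word x (length u) = u" using a by (simp add: cyl_def)
next
  assume a: "x \<in> Sigma_sh m \<and> prefix_word x (length u) = u"
  show "x \<in> cyl m u" unfolding cyl_def
  proof (safe)
    show "x \<in> Sigma_sh m" using a by simp
    fix j assume j: "j \<in> {1..length u}"
    have "u ! (j - 1) = prefix_word x (length u) ! (j - 1)" using a by simp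
    also have "\<dots> = x j" using j by (subst prefix_word_nth) auto
    finally show "x j = u ! (j - 1)" by simp
  qed
qed

lemma finite_words: "finite (words m n)"
proof -
  have "words m n \<subseteq> {xs. set xs \<subseteq> {..<m} \<and> length xs = n}" by (auto simp: words_def)
  thus ?thesis using finite_lists_length_eq[of "{..<m}" n] by (auto intro: finite_subset)
qed

lemma cyl_disjoint: "u \<in> words m n \<Longrightarrow> v \<in> words m n \<Longrightarrow> u \<noteq> v \<Longrightarrow> cyl m u \<inter> cyl m v = {}"
  by (auto simp: words_def dest!: cyl_iff_prefix[THEN iffD1])

lemma Sigma_cover: "Sigma_sh m = (\<Union>u\<in>words m n. cyl m u)"
proof
  show "Sigma_sh m \<subseteq> (\<Union>u\<in>words m n. cyl m u)"
  proof
    fix x assume "x \<in> Sigma_sh m"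
    thus "x \<in> (\<Union>u\<in>words m n. cyl m u)" using prefix_in_words[of x m n] in_cyl_prefix[of x m n] by blast
  qed
  show "(\<Union>u\<in>words m n. cyl m u) \<subseteq> Sigma_sh m" using cyl_subset by blast
qed

lemma cylset_eq: "{x \<in> Sigma_sh m. Q (prefix_word x n)} = (\<Union>u\<in>{u\<in>words m n. Q u}. cyl m u)"
proof
  show "{x \<in> Sigma_sh m. Q (prefix_word x n)} \<subseteq> (\<Union>u\<in>{u\<in>words m n. Q u}. cyl m u)"
  proof
    fix x assume "x \<in> {x \<in> Sigma_sh m. Q (prefix_word x n)}"
    hence x: "x \<in> Sigma_sh m" "Q (prefix_word x n)" by auto
    thus "x \<in> (\<Union>u\<in>{u\<in>words m n. Q u}. cyl m u)"
      using prefix_in_words[OF x(1), of n] in_cyl_prefix[OF x(1), of n] by blast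
  qed
  show "(\<Union>u\<in>{u\<in>words m n. Q u}. cyl m u) \<subseteq> {x \<in> Sigma_sh m. Q (prefix_word x n)}"
  proof
    fix x assume "x \<in> (\<Union>u\<in>{u\<in>words m n. Q u}. cyl m u)"
    then obtain u where u: "u \<in> words m n" "Q u" "x \<in> cyl m u" by blast
    hence "length u = n" by (simp add: words_def)
    thus "x \<in> {x \<in> Sigma_sh m. Q (prefix_word x n)}" using u(2,3) unfolding cyl_iff_prefix by auto
  qed
qed

lemma cylset_sets: "m \<ge> 2 \<Longrightarrow> {x \<in> Sigma_sh m. Q (prefix_word x n)} \<in> sets (borel_Sigma m)"
  unfolding cylset_eq using finite_words cyl_sets
  by (intro sets.finite_UN) (auto intro: finite_subset)

lemma cylset_measure:
  assumes m: "m \<ge> 2" and M: "sets M = sets (borel_Sigma m)" and fin: "finite_measure M"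
  shows "measure M {x \<in> Sigma_sh m. Q (prefix_word x n)} = (\<Sum>u\<in>{u\<in>words m n. Q u}. measure M (cyl m u))"
proof -
  interpret finite_measure M by fact
  have d: "disjoint_family_on (cyl m) {u\<in>words m n. Q u}"
    unfolding disjoint_family_on_def using cyl_disjoint[of _ m n] by blast
  show ?thesis unfolding cylset_eq
    by (rule finite_measure_finite_Union) (use finite_words m M cyl_sets d in \<open>auto intro: finite_subset\<close>)
qed


definition Kc :: "nat \<Rightarrow> nat \<Rightarrow> nat \<Rightarrow> nat" where
  "Kc q n i = (LEAST r. n < q ^ r * i)"

definition Iset :: "nat \<Rightarrow> nat \<Rightarrow> nat set" where
  "Iset q n = {i\<in>{1..n}. \<not> q dvd i}"

lemma finite_Iset[simp]: "finite (Iset q n)" by (simp add: Iset_def)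

lemma Kc_ex: assumes "q \<ge> 2" "i \<ge> 1" shows "n < q ^ n * i"
proof -
  have "n < 2 ^ n" by (rule less_exp)
  also have "\<dots> \<le> q ^ n" by (rule power_mono) (use assms in auto)
  also have "\<dots> \<le> q ^ n * i" using assms by simp
  finally show ?thesis .
qed

lemma Kc_props:
  assumes "q \<ge> 2" "i \<ge> 1"
  shows "n < q ^ Kc q n i * i" "\<And>r. r < Kc q n i \<Longrightarrow> q ^ r * i \<le> n" "Kc q n i \<le> n"
proof -
  have ex: "\<exists>r. n < q ^ r * i" using Kc_ex[OF assms] by blast
  show "n < q ^ Kc q n i * i" unfolding Kc_def using ex by (rule LeastI_ex)
  show "\<And>r. r < Kc q n i \<Longrightarrow> q ^ r * i \<le> n" unfolding Kc_def
    using not_less_Least by (metis not_le)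
  show "Kc q n i \<le> n" unfolding Kc_def using Kc_ex[OF assms] by (rule Least_le)
qed

lemma Kc_eqI:
  assumes "q \<ge> 2" "i \<ge> 1" "n < q ^ K * i" "\<And>r. r < K \<Longrightarrow> q ^ r * i \<le> n"
  shows "Kc q n i = K"
  unfolding Kc_def
proof (rule Least_equality)
  show "n < q ^ K * i" by fact
  fix y assume "n < q ^ y * i"
  thus "K \<le> y" using assms(4)[of y] by (metis not_le)
qed

lemma pow_mono_q: "q \<ge> 2 \<Longrightarrow> r \<le> r' \<Longrightarrow> q ^ r * i \<le> q ^ r' * (i::nat)"
  by (simp add: power_increasing)

lemma Kc_le_iff:
  assumes "q \<ge> 2" "i \<ge> 1"
  shows "q ^ r * i \<le> n \<longleftrightarrow> r < Kc q n i"
proof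
  assume a: "q ^ r * i \<le> n"
  show "r < Kc q n i"
  proof (rule ccontr)
    assume "\<not> r < Kc q n i"
    hence "Kc q n i \<le> r" by simp
    hence "q ^ Kc q n i * i \<le> q ^ r * i" by (rule pow_mono_q[OF assms(1)])
    thus False using a Kc_props(1)[OF assms, where n=n] by linarith
  qed
next
  assume "r < Kc q n i" thus "q ^ r * i \<le> n" using Kc_props(2)[OF assms] by blast
qed

lemma filter_upt_less: "K \<le> N \<Longrightarrow> filter (\<lambda>r. r < K) [0..<N] = [0..<K]"
proof (induction N)
  case 0 thus ?case by simp
next
  case (Suc N)
  show ?case
  proof (cases "K = Suc N")
    case True
    hence "filter (\<lambda>r. r < K) [0..<N] = [0..<N]" by (simp add: filter_True)
    thus ?thesis using True by simp
  next
    case False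
    hence "K \<le> N" using Suc.prems by simp
    thus ?thesis using Suc.IH by simp
  qed
qed

lemma restrJ_eq:
  assumes "q \<ge> 2" "i \<ge> 1"
  shows "restrJ q i u = map (\<lambda>r. u ! (q ^ r * i - 1)) [0..<Kc q (length u) i]"
proof -
  have "filter (\<lambda>r. q ^ r * i \<le> length u) [0..<length u + 1]
      = filter (\<lambda>r. r < Kc q (length u) i) [0..<length u + 1]"
    using Kc_le_iff[OF assms] by simp
  also have "\<dots> = [0..<Kc q (length u) i]"
    by (rule filter_upt_less) (use Kc_props(3)[OF assms, of "length u"] in simp)
  finally show ?thesis unfolding restrJ_def by simp
qed

lemma length_restrJ:
  "q \<ge> 2 \<Longrightarrow> i \<ge> 1 \<Longrightarrow> length (restrJ q i u) = Kc q (length u) i"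
  by (simp add: restrJ_eq)

lemma Kc_Suc:
  assumes q: "q \<ge> 2" and i: "i \<ge> 1"
  shows "Kc q (Suc n) i = (if q ^ Kc q n i * i = Suc n then Suc (Kc q n i) else Kc q n i)"
proof -
  define K where "K = Kc q n i"
  note P = Kc_props[OF q i, where n=n, folded K_def]
  show ?thesis
  proof (cases "q ^ K * i = Suc n")
    case True
    have "Kc q (Suc n) i = Suc K"
    proof (rule Kc_eqI[OF q i])
      have "1 * Suc n < q * Suc n" by (rule mult_strict_right_mono) (use q in auto)
      hence "Suc n < q * Suc n" by simp
      thus "Suc n < q ^ Suc K * i" using True by (simp add: mult.assoc)
      fix r assume "r < Suc K"
      hence "r \<le> K" by simp
      hence "q ^ r * i \<le> q ^ K * i" by (rule pow_mono_q[OF q])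
      thus "q ^ r * i \<le> Suc n" using True by simp
    qed
    thus ?thesis using True by (simp add: K_def)
  next
    case False
    have "Kc q (Suc n) i = K"
    proof (rule Kc_eqI[OF q i])
      show "Suc n < q ^ K * i" using P(1) False by simp
      fix r assume "r < K" thus "q ^ r * i \<le> Suc n" using P(2)[of r] by simp
    qed
    thus ?thesis using False by (simp add: K_def)
  qed
qed

lemma restrJ_snoc:
  assumes q: "q \<ge> 2" and i: "i \<ge> 1" and len: "length u = n"
  shows "restrJ q i (u @ [a]) =
    (if q ^ Kc q n i * i = Suc n then restrJ q i u @ [a] else restrJ q i u)"
proof -
  define K where "K = Kc q n i"
  note P = Kc_props[OF q i, where n=n, folded K_def]
  have A: "map (\<lambda>r. (u @ [a]) ! (q ^ r * i - 1)) [0..<K] = map (\<lambda>r. u ! (q ^ r * i - 1)) [0..<K]"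
  proof (rule map_cong[OF refl])
    fix r assume "r \<in> set [0..<K]"
    hence "q ^ r * i \<le> n" using P(2) by simp
    moreover have "q ^ r * i \<ge> 1" using i q by simp
    ultimately have "q ^ r * i - 1 < length u" using len by linarith
    thus "(u @ [a]) ! (q ^ r * i - 1) = u ! (q ^ r * i - 1)" by (simp add: nth_append)
  qed
  have R: "restrJ q i u = map (\<lambda>r. u ! (q ^ r * i - 1)) [0..<K]"
    unfolding restrJ_eq[OF q i] len K_def ..
  show ?thesis
  proof (cases "q ^ K * i = Suc n")
    case True
    have aa: "(u @ [a]) ! (q ^ K * i - 1) = a" using True len by (simp add: nth_append)
    have k: "Kc q (length (u @ [a])) i = Suc K" using Kc_Suc[OF q i, of n] True len by (simp add: K_def)
    have "restrJ q i (u @ [a]) = map (\<lambda>r. (u @ [a]) ! (q ^ r * i - 1)) [0..<K] @ [(u @ [a]) ! (q ^ K * i - 1)]"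
      unfolding restrJ_eq[OF q i] k by simp
    also have "\<dots> = restrJ q i u @ [a]" using A aa R by simp
    finally show ?thesis using True by (simp add: K_def)
  next
    case False
    have k: "Kc q (length (u @ [a])) i = K" using Kc_Suc[OF q i, of n] False len by (simp add: K_def)
    have "restrJ q i (u @ [a]) = map (\<lambda>r. (u @ [a]) ! (q ^ r * i - 1)) [0..<K]"
      unfolding restrJ_eq[OF q i] k ..
    also have "\<dots> = restrJ q i u" using A R by simp
    finally show ?thesis using False by (simp add: K_def)
  qed
qed

lemma decomp_ex:
  fixes q p :: nat
  assumes q: "q \<ge> 2" and p: "p \<ge> 1"
  shows "\<exists>r i. p = q ^ r * i \<and> \<not> q dvd i"
  using p
proof (induction p rule: less_induct)
  case (less p)
  show ?case
  proof (cases "q dvd p")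
    case False thus ?thesis by (intro exI[of _ 0] exI[of _ p]) simp
  next
    case True
    then obtain p' where p': "p = q * p'" by blast
    hence "p' \<ge> 1" using less.prems by (cases p') auto
    moreover have "p' < p" using p' q \<open>p' \<ge> 1\<close> by simp
    ultimately obtain r i where "p' = q ^ r * i" "\<not> q dvd i" using less.IH by blast
    thus ?thesis using p' by (intro exI[of _ "Suc r"] exI[of _ i]) (simp add: mult.assoc)
  qed
qed

lemma decomp_unique_aux:
  fixes q :: nat
  assumes q: "q \<ge> 2" and eq: "q ^ r * i = q ^ r' * (i'::nat)" and "r \<le> r'"
    and ni: "\<not> q dvd i"
  shows "i = i' \<and> r = r'"
proof -
  obtain d where d: "r' = r + d" using assms(3) le_Suc_ex by blast
  have "q ^ r * i = q ^ r * (q ^ d * i')" using eq d by (simp add: power_add mult.assoc)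
  hence ii: "i = q ^ d * i'" using q by simp
  have "d = 0"
  proof (rule ccontr)
    assume "d \<noteq> 0"
    hence "q dvd q ^ d" by (simp add: dvd_power)
    hence "q dvd i" using ii by simp
    thus False using ni by simp
  qed
  thus ?thesis using ii d by simp
qed

lemma decomp_unique:
  fixes q :: nat
  assumes q: "q \<ge> 2" and eq: "q ^ r * i = q ^ r' * (i'::nat)"
    and ni: "\<not> q dvd i" and ni': "\<not> q dvd i'"
  shows "i = i' \<and> r = r'"
proof (cases "r \<le> r'")
  case True thus ?thesis using decomp_unique_aux[OF q eq True ni] by simp
next
  case False thus ?thesis using decomp_unique_aux[OF q eq[symmetric] _ ni'] by simp
qed

lemma words_Suc_image: "words m (Suc n) = (\<lambda>(u, a). u @ [a]) ` (words m n \<times> {..<m})"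
proof
  show "words m (Suc n) \<subseteq> (\<lambda>(u, a). u @ [a]) ` (words m n \<times> {..<m})"
  proof
    fix w assume w: "w \<in> words m (Suc n)"
    hence ne: "w \<noteq> []" by (auto simp: words_def)
    have "w = butlast w @ [last w]" using ne by simp
    moreover have "butlast w \<in> words m n" using w by (auto simp: words_def dest: in_set_butlastD)
    moreover have "last w < m" using w ne by (auto simp: words_def)
    ultimately show "w \<in> (\<lambda>(u, a). u @ [a]) ` (words m n \<times> {..<m})"
      by (intro image_eqI[of _ _ "(butlast w, last w)"]) auto
  qed
  show "(\<lambda>(u, a). u @ [a]) ` (words m n \<times> {..<m}) \<subseteq> words m (Suc n)"
    by (auto simp: words_def)
qed

lemma words_Suc_sum:
  "(\<Sum>u\<in>words m (Suc n). f u) = (\<Sum>u\<in>words m n. \<Sum>a<m. f (u @ [a]))"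
proof -
  have inj: "inj_on (\<lambda>(u, a). u @ [a]) (words m n \<times> {..<m})"
    by (auto simp: inj_on_def)
  have "(\<Sum>u\<in>words m (Suc n). f u) = (\<Sum>p\<in>words m n \<times> {..<m}. f ((\<lambda>(u, a). u @ [a]) p))"
    unfolding words_Suc_image by (rule sum.reindex[OF inj, unfolded comp_def])
  also have "\<dots> = (\<Sum>u\<in>words m n. \<Sum>a<m. f (u @ [a]))"
    by (subst sum.cartesian_product) (simp add: case_prod_beta)
  finally show ?thesis .
qed

lemma words_zero: "words m 0 = {[]}" by (auto simp: words_def)

lemma words_one_sum: "(\<Sum>u\<in>words m (Suc 0). f u) = (\<Sum>a<m. f [a])"
  by (simp add: words_Suc_sum words_zero)

lemma Iset_Suc:
  "Iset q (Suc n) = (if q dvd Suc n then Iset q n else insert (Suc n) (Iset q n))"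
  by (auto simp: Iset_def le_Suc_eq)

lemma prod_words:
  fixes F :: "nat \<Rightarrow> nat list \<Rightarrow> real"
  assumes q: "q \<ge> 2"
  shows "(\<Sum>u\<in>words m n. \<Prod>i\<in>Iset q n. F i (restrJ q i u))
       = (\<Prod>i\<in>Iset q n. \<Sum>v\<in>words m (Kc q n i). F i v)"
proof (induction n arbitrary: F)
  case 0 thus ?case by (simp add: words_zero Iset_def)
next
  case (Suc n)
  obtain r0 i0 where d: "Suc n = q ^ r0 * i0" "\<not> q dvd i0"
    using decomp_ex[OF q, of "Suc n"] by auto
  have i0pos: "i0 \<ge> 1" using d by (cases i0) auto
  have Kc0: "Kc q n i0 = r0"
  proof (rule Kc_eqI[OF q i0pos])
    show "n < q ^ r0 * i0" using d by simp
    fix r assume "r < r0"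
    hence "q ^ r < q ^ r0" using q by simp
    hence "q ^ r * i0 < q ^ r0 * i0" by (rule mult_strict_right_mono) (use i0pos in simp)
    thus "q ^ r * i0 \<le> n" using d(1) by linarith
  qed
  have hit0: "q ^ Kc q n i0 * i0 = Suc n" using Kc0 d by simp
  have nohit: "q ^ Kc q n i * i \<noteq> Suc n" if "i \<in> Iset q n" "i \<noteq> i0" for i
  proof
    assume "q ^ Kc q n i * i = Suc n"
    hence "q ^ Kc q n i * i = q ^ r0 * i0" using d by simp
    hence "i = i0" using decomp_unique[OF q _ _ d(2)] that(1) by (auto simp: Iset_def)
    thus False using that by simp
  qed
  have iI: "i \<ge> 1" if "i \<in> Iset q n" for i using that by (simp add: Iset_def)
  have restr_other: "restrJ q i (u @ [a]) = restrJ q i u" if "i \<in> Iset q n" "i \<noteq> i0" "u \<in> words m n" for i u a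
    using restrJ_snoc[OF q iI[OF that(1)], of u n a] nohit[OF that(1,2)] that(3) by (simp add: words_def)
  have Kc_other: "Kc q (Suc n) i = Kc q n i" if "i \<in> Iset q n" "i \<noteq> i0" for i
    using Kc_Suc[OF q iI[OF that(1)], of n] nohit[OF that] by simp
  have restr0: "restrJ q i0 (u @ [a]) = restrJ q i0 u @ [a]" if "u \<in> words m n" for u a
    using restrJ_snoc[OF q i0pos, of u n a] hit0 that by (simp add: words_def)
  have Kc_0: "Kc q (Suc n) i0 = Suc (Kc q n i0)"
    using Kc_Suc[OF q i0pos, of n] hit0 by simp
  show ?case
  proof (cases "r0 = 0")
    case True
    hence i0: "i0 = Suc n" using d by simp
    hence ndvd: "\<not> q dvd Suc n" using d(2) by simp
    have notin: "Suc n \<notin> Iset q n" by (simp add: Iset_def)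
    have I: "Iset q (Suc n) = insert (Suc n) (Iset q n)" using ndvd Iset_Suc by simp
    have r0u: "restrJ q i0 u = []" if "u \<in> words m n" for u
      using length_restrJ[OF q i0pos, of u] Kc0 True that by (simp add: words_def)
    have "(\<Sum>u\<in>words m (Suc n). \<Prod>i\<in>Iset q (Suc n). F i (restrJ q i u))
        = (\<Sum>u\<in>words m n. \<Sum>a<m. F i0 [a] * (\<Prod>i\<in>Iset q n. F i (restrJ q i u)))"
      unfolding words_Suc_sum I
    proof (intro sum.cong refl)
      fix u a assume u: "u \<in> words m n" and "a \<in> {..<m}"
      have "(\<Prod>i\<in>Iset q n. F i (restrJ q i (u @ [a]))) = (\<Prod>i\<in>Iset q n. F i (restrJ q i u))"
      proof (rule prod.cong[OF refl])
        fix i assume ii: "i \<in> Iset q n"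
        hence "i \<noteq> i0" using notin i0 by auto
        thus "F i (restrJ q i (u @ [a])) = F i (restrJ q i u)" using restr_other[OF ii _ u] by simp
      qed
      thus "(\<Prod>i\<in>insert (Suc n) (Iset q n). F i (restrJ q i (u @ [a]))) =
            F i0 [a] * (\<Prod>i\<in>Iset q n. F i (restrJ q i u))"
        using notin restr0[OF u, of a] r0u[OF u] i0 by simp
    qed
    also have "\<dots> = (\<Sum>a<m. F i0 [a]) * (\<Sum>u\<in>words m n. \<Prod>i\<in>Iset q n. F i (restrJ q i u))"
      by (simp add: sum_distrib_left sum_distrib_right)
    also have "\<dots> = (\<Sum>a<m. F i0 [a]) * (\<Prod>i\<in>Iset q n. \<Sum>v\<in>words m (Kc q n i). F i v)"
      using Suc.IH by simp
    also have "\<dots> = (\<Prod>i\<in>Iset q (Suc n). \<Sum>v\<in>words m (Kc q (Suc n) i). F i v)"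
    proof -
      have "(\<Prod>i\<in>Iset q n. \<Sum>v\<in>words m (Kc q n i). F i v) = (\<Prod>i\<in>Iset q n. \<Sum>v\<in>words m (Kc q (Suc n) i). F i v)"
      proof (rule prod.cong[OF refl])
        fix i assume ii: "i \<in> Iset q n"
        hence "i \<noteq> i0" using notin i0 by auto
        thus "(\<Sum>v\<in>words m (Kc q n i). F i v) = (\<Sum>v\<in>words m (Kc q (Suc n) i). F i v)"
          using Kc_other[OF ii] by simp
      qed
      moreover have "Kc q (Suc n) i0 = Suc 0" using Kc_0 Kc0 True by simp
      ultimately show ?thesis unfolding I using notin i0 by (simp add: words_one_sum)
    qed
    finally show ?thesis .
  next
    case False
    hence dvd: "q dvd Suc n" using d by (auto simp: dvd_mult2)
    have I: "Iset q (Suc n) = Iset q n" using dvd Iset_Suc by simp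
    have i0n: "i0 \<le> n"
    proof -
      have "q ^ r0 \<ge> q" using False q by (simp add: self_le_power)
      hence "q * i0 \<le> Suc n" using d by (metis mult_le_mono1)
      moreover have "2 * i0 \<le> q * i0" using q by simp
      ultimately show ?thesis using i0pos by linarith
    qed
    have i0I: "i0 \<in> Iset q n" using i0n i0pos d(2) by (simp add: Iset_def)
    define F' where "F' = F(i0 := (\<lambda>w. \<Sum>a<m. F i0 (w @ [a])))"
    have "(\<Sum>u\<in>words m (Suc n). \<Prod>i\<in>Iset q (Suc n). F i (restrJ q i u))
        = (\<Sum>u\<in>words m n. \<Prod>i\<in>Iset q n. F' i (restrJ q i u))"
      unfolding words_Suc_sum I
    proof (intro sum.cong refl)
      fix u assume u: "u \<in> words m n"
      have split: "\<And>G. (\<Prod>i\<in>Iset q n. G i) = G i0 * (\<Prod>i\<in>Iset q n - {i0}. G i)"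
        using i0I by (simp add: prod.remove)
      have "(\<Sum>a<m. \<Prod>i\<in>Iset q n. F i (restrJ q i (u @ [a])))
          = (\<Sum>a<m. F i0 (restrJ q i0 u @ [a]) * (\<Prod>i\<in>Iset q n - {i0}. F i (restrJ q i u)))"
      proof (rule sum.cong[OF refl])
        fix a assume "a \<in> {..<m}"
        have "(\<Prod>i\<in>Iset q n - {i0}. F i (restrJ q i (u @ [a]))) = (\<Prod>i\<in>Iset q n - {i0}. F i (restrJ q i u))"
          by (rule prod.cong[OF refl]) (use restr_other[OF _ _ u] in auto)
        thus "(\<Prod>i\<in>Iset q n. F i (restrJ q i (u @ [a]))) = F i0 (restrJ q i0 u @ [a]) * (\<Prod>i\<in>Iset q n - {i0}. F i (restrJ q i u))"
          using split[of "\<lambda>i. F i (restrJ q i (u @ [a]))"] restr0[OF u] by simp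
      qed
      also have "\<dots> = F' i0 (restrJ q i0 u) * (\<Prod>i\<in>Iset q n - {i0}. F' i (restrJ q i u))"
        by (simp add: F'_def sum_distrib_right)
      also have "\<dots> = (\<Prod>i\<in>Iset q n. F' i (restrJ q i u))" using split[of "\<lambda>i. F' i (restrJ q i u)"] by simp
      finally show "(\<Sum>a<m. \<Prod>i\<in>Iset q n. F i (restrJ q i (u @ [a]))) = (\<Prod>i\<in>Iset q n. F' i (restrJ q i u))" .
    qed
    also have "\<dots> = (\<Prod>i\<in>Iset q n. \<Sum>v\<in>words m (Kc q n i). F' i v)" by (rule Suc.IH)
    also have "\<dots> = (\<Prod>i\<in>Iset q (Suc n). \<Sum>v\<in>words m (Kc q (Suc n) i). F i v)"
      unfolding I
    proof (rule prod.cong[OF refl])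
      fix i assume i: "i \<in> Iset q n"
      show "(\<Sum>v\<in>words m (Kc q n i). F' i v) = (\<Sum>v\<in>words m (Kc q (Suc n) i). F i v)"
      proof (cases "i = i0")
        case True thus ?thesis using Kc_0 by (simp add: F'_def words_Suc_sum)
      next
        case False thus ?thesis using Kc_other[OF i False] by (simp add: F'_def)
      qed
    qed
    finally show ?thesis .
  qed
qed


lemma card_words: "card (words m k) = m ^ k"
proof -
  have "words m k = {xs. set xs \<subseteq> {..<m} \<and> length xs = k}" by (auto simp: words_def)
  thus ?thesis using card_lists_length_eq[of "{..<m}" k] by simp
qed

lemma exp_half_bound1: "y \<ge> 0 \<Longrightarrow> y * exp (- y / 2) \<le> (2::real)"
proof -
  assume y: "y \<ge> 0"
  have "1 + y / 2 \<le> exp (y / 2)" by (rule exp_ge_add_one_self)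
  hence "y / 2 \<le> exp (y / 2)" by linarith
  hence "y \<le> 2 * exp (y / 2)" by linarith
  hence "y * exp (- y / 2) \<le> 2 * exp (y / 2) * exp (- y / 2)" by (simp add: mult_right_mono)
  also have "\<dots> = 2" by (simp add: exp_add[symmetric])
  finally show ?thesis .
qed

lemma exp_half_bound2: "y \<ge> 0 \<Longrightarrow> y^2 * exp (- y / 2) \<le> (8::real)"
proof -
  assume y: "y \<ge> 0"
  have "1 + y / 2 + (y / 2)^2 / 2 \<le> exp (y / 2)" by (rule exp_lower_Taylor_quadratic) (use y in simp)
  moreover have "0 \<le> 1 + y / 2" using y by simp
  ultimately have "(y / 2)^2 / 2 \<le> exp (y / 2)" by linarith
  hence "y^2 \<le> 8 * exp (y / 2)" by (simp add: power_divide)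
  hence "y^2 * exp (- y / 2) \<le> 8 * exp (y / 2) * exp (- y / 2)" by (simp add: mult_right_mono)
  also have "\<dots> = 8" by (simp add: exp_add[symmetric])
  finally show ?thesis .
qed

lemma pt_bound1:
  fixes p N :: real
  assumes p: "0 < p" "p \<le> 1" and N: "N \<ge> 1"
  shows "- p * ln p \<le> 2 * ln N * p + 2 / N"
proof (cases "p < 1 / N^2")
  case True
  define y where "y = - ln p"
  have y0: "y \<ge> 0" using p ln_le_zero_iff[of p] by (simp add: y_def)
  have pe: "p = exp (- y)" using p by (simp add: y_def)
  have "exp (- y) = (exp (- y / 2))^2" by (simp add: power2_eq_square exp_add[symmetric])
  hence sq: "sqrt p = exp (- y / 2)" using pe by simp
  have "sqrt p < sqrt (1 / N^2)" using True by (simp add: real_sqrt_less_iff)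
  hence sp: "sqrt p < 1 / N" using N by (simp add: real_sqrt_divide)
  have "- p * ln p = y * exp (- y)" using pe by (simp add: y_def)
  also have "\<dots> = (y * exp (- y / 2)) * exp (- y / 2)" by (simp add: exp_add[symmetric] mult.assoc)
  also have "\<dots> \<le> 2 * exp (- y / 2)" using exp_half_bound1[OF y0] by (simp add: mult_right_mono)
  also have "\<dots> \<le> 2 / N" using sp sq by simp
  also have "\<dots> \<le> 2 * ln N * p + 2 / N" using N p by simp
  finally show ?thesis .
next
  case False
  hence "ln (1 / N^2) \<le> ln p" using p N by simp
  hence a: "- ln p \<le> 2 * ln N" using N by (simp add: ln_div ln_realpow)
  have c: "p * (- ln p) \<le> p * (2 * ln N)" by (rule mult_left_mono) (use a p in auto)
  have "0 \<le> 2 / N" using N by simp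
  moreover have "- p * ln p = p * (- ln p)" by simp
  moreover have "p * (2 * ln N) = 2 * ln N * p" by simp
  ultimately show ?thesis using c by linarith
qed

lemma pt_bound2:
  fixes p N :: real
  assumes p: "0 < p" "p \<le> 1" and N: "N \<ge> 1"
  shows "p * (ln p)^2 \<le> 4 * (ln N)^2 * p + 8 / N"
proof (cases "p < 1 / N^2")
  case True
  define y where "y = - ln p"
  have y0: "y \<ge> 0" using p ln_le_zero_iff[of p] by (simp add: y_def)
  have pe: "p = exp (- y)" using p by (simp add: y_def)
  have "exp (- y) = (exp (- y / 2))^2" by (simp add: power2_eq_square exp_add[symmetric])
  hence sq: "sqrt p = exp (- y / 2)" using pe by simp
  have "sqrt p < sqrt (1 / N^2)" using True by (simp add: real_sqrt_less_iff)
  hence sp: "sqrt p < 1 / N" using N by (simp add: real_sqrt_divide)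
  have "p * (ln p)^2 = y^2 * exp (- y)" using pe by (simp add: y_def)
  also have "\<dots> = (y^2 * exp (- y / 2)) * exp (- y / 2)" by (simp add: exp_add[symmetric] mult.assoc)
  also have "\<dots> \<le> 8 * exp (- y / 2)" using exp_half_bound2[OF y0] by (simp add: mult_right_mono)
  also have "\<dots> \<le> 8 / N" using sp sq by simp
  also have "\<dots> \<le> 4 * (ln N)^2 * p + 8 / N" using N p by simp
  finally show ?thesis .
next
  case False
  hence "ln (1 / N^2) \<le> ln p" using p N by simp
  hence a: "- ln p \<le> 2 * ln N" using N by (simp add: ln_div ln_realpow)
  have b: "0 \<le> - ln p" using p by simp
  have "(ln p)^2 = (- ln p)^2" by simp
  also have "\<dots> \<le> (2 * ln N)^2" by (rule power_mono[OF a b])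
  finally have "(ln p)^2 \<le> 4 * (ln N)^2" by (simp add: power_mult_distrib)
  hence c: "p * (ln p)^2 \<le> p * (4 * (ln N)^2)" using p by (simp add: mult_left_mono)
  have "0 \<le> 8 / N" using N by simp
  moreover have "p * (4 * (ln N)^2) = 4 * (ln N)^2 * p" by simp
  ultimately show ?thesis using c by linarith
qed

lemma sum_bound1:
  assumes fin: "finite A" and cA: "real (card A) \<le> N" and N: "N \<ge> 1"
    and p: "\<And>a. a \<in> A \<Longrightarrow> 0 \<le> p a \<and> p a \<le> 1" and s: "sum p A \<le> 1"
  shows "(\<Sum>a\<in>A. - p a * ln (p a)) \<le> 2 * ln N + 2"
proof -
  have "(\<Sum>a\<in>A. - p a * ln (p a)) \<le> (\<Sum>a\<in>A. 2 * ln N * p a + 2 / N)"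
  proof (rule sum_mono)
    fix a assume a: "a \<in> A"
    show "- p a * ln (p a) \<le> 2 * ln N * p a + 2 / N"
    proof (cases "p a = 0")
      case True thus ?thesis using N by simp
    next
      case False thus ?thesis using pt_bound1[of "p a" N] p[OF a] N by simp
    qed
  qed
  also have "\<dots> = 2 * ln N * sum p A + real (card A) * (2 / N)"
    by (simp add: sum.distrib sum_distrib_left)
  also have "\<dots> \<le> 2 * ln N * 1 + N * (2 / N)"
  proof (rule add_mono)
    show "2 * ln N * sum p A \<le> 2 * ln N * 1" using s N by (intro mult_left_mono) auto
    show "real (card A) * (2 / N) \<le> N * (2 / N)" using cA N by (intro mult_right_mono) auto
  qed
  also have "\<dots> = 2 * ln N + 2" using N by simp
  finally show ?thesis .
qed

lemma sum_bound2:
  assumes fin: "finite A" and cA: "real (card A) \<le> N" and N: "N \<ge> 1"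
    and p: "\<And>a. a \<in> A \<Longrightarrow> 0 \<le> p a \<and> p a \<le> 1" and s: "sum p A \<le> 1"
  shows "(\<Sum>a\<in>A. p a * (ln (p a))^2) \<le> 4 * (ln N)^2 + 8"
proof -
  have "(\<Sum>a\<in>A. p a * (ln (p a))^2) \<le> (\<Sum>a\<in>A. 4 * (ln N)^2 * p a + 8 / N)"
  proof (rule sum_mono)
    fix a assume a: "a \<in> A"
    show "p a * (ln (p a))^2 \<le> 4 * (ln N)^2 * p a + 8 / N"
    proof (cases "p a = 0")
      case True thus ?thesis using N by simp
    next
      case False thus ?thesis using pt_bound2[of "p a" N] p[OF a] N by simp
    qed
  qed
  also have "\<dots> = 4 * (ln N)^2 * sum p A + real (card A) * (8 / N)"
    by (simp add: sum.distrib sum_distrib_left)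
  also have "\<dots> \<le> 4 * (ln N)^2 * 1 + N * (8 / N)"
  proof (rule add_mono)
    show "4 * (ln N)^2 * sum p A \<le> 4 * (ln N)^2 * 1" using s by (intro mult_left_mono) auto
    show "real (card A) * (8 / N) \<le> N * (8 / N)" using cA N by (intro mult_right_mono) auto
  qed
  also have "\<dots> = 4 * (ln N)^2 + 8" using N by simp
  finally show ?thesis .
qed


locale PS =
  fixes m q :: nat and \<Omega> :: "(nat \<Rightarrow> nat) set" and \<mu> P :: "(nat \<Rightarrow> nat) measure"
  assumes m2: "m \<ge> 2" and q2: "q \<ge> 2"
    and \<Omega>ne: "\<Omega> \<noteq> {}" and \<Omega>cl: "Sclosed m \<Omega>"
    and prob\<mu>: "prob_space \<mu>" and sets\<mu>: "sets \<mu> = sets (borel_Sigma m)" and \<mu>\<Omega>: "emeasure \<mu> \<Omega> = 1"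
    and probP: "prob_space P" and setsP: "sets P = sets (borel_Sigma m)"
    and Pcyl: "\<And>u. u \<in> words m (length u) \<Longrightarrow>
           measure P (cyl m u) =
             (\<Prod>i\<in>{i\<in>{1..length u}. \<not> q dvd i}. measure \<mu> (cyl m (restrJ q i u)))"
begin

definition mu where "mu v = measure \<mu> (cyl m v)"
definition Pc where "Pc u = measure P (cyl m u)"
definition phi where "phi v = - log (real m) (mu v)"
definition Hk where "Hk k = (\<Sum>v\<in>words m k. mu v * phi v)"
definition Wk where "Wk k = (\<Sum>v\<in>words m k. mu v * (phi v)^2)"
definition T where "T n u = (\<Sum>j\<in>Iset q n. phi (restrJ q j u))"
definition aa where "aa n = (\<Sum>j\<in>Iset q n. Hk (Kc q n j))"

lemma space_mu: "space \<mu> = Sigma_sh m"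
  using sets_eq_imp_space_eq[OF sets\<mu>] by simp
lemma space_P: "space P = Sigma_sh m"
  using sets_eq_imp_space_eq[OF setsP] by simp

lemma mu_nonneg: "0 \<le> mu v" by (simp add: mu_def)
lemma mu_le1: "mu v \<le> 1"
  unfolding mu_def using prob_space.prob_le_1[OF prob\<mu>] .
lemma Pc_nonneg: "0 \<le> Pc v" by (simp add: Pc_def)

lemma sum_mu: "(\<Sum>v\<in>words m k. mu v) = 1"
proof -
  have "measure \<mu> {x \<in> Sigma_sh m. (\<lambda>_. True) (prefix_word x k)} = (\<Sum>u\<in>{u\<in>words m k. True}. measure \<mu> (cyl m u))"
    by (rule cylset_measure[OF m2 sets\<mu>]) (use prob\<mu> in \<open>simp add: prob_space_def\<close>)
  moreover have "measure \<mu> (Sigma_sh m) = 1"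
    using prob_space.prob_space[OF prob\<mu>] space_mu by simp
  ultimately show ?thesis by (simp add: mu_def)
qed

lemma sum_Pc: "(\<Sum>v\<in>words m k. Pc v) = 1"
proof -
  have "measure P {x \<in> Sigma_sh m. (\<lambda>_. True) (prefix_word x k)} = (\<Sum>u\<in>{u\<in>words m k. True}. measure P (cyl m u))"
    by (rule cylset_measure[OF m2 setsP]) (use probP in \<open>simp add: prob_space_def\<close>)
  moreover have "measure P (Sigma_sh m) = 1"
    using prob_space.prob_space[OF probP] space_P by simp
  ultimately show ?thesis by (simp add: Pc_def)
qed

lemma Pc_prod: "u \<in> words m n \<Longrightarrow> Pc u = (\<Prod>i\<in>Iset q n. mu (restrJ q i u))"
proof -
  assume u: "u \<in> words m n"
  hence l: "length u = n" by (simp add: words_def)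
  hence "u \<in> words m (length u)" using u by simp
  from Pcyl[OF this] show ?thesis unfolding Pc_def mu_def Iset_def l .
qed

lemma E_gen:
  "(\<Sum>u\<in>words m n. Pc u * (\<Prod>i\<in>Iset q n. G i (restrJ q i u)))
     = (\<Prod>i\<in>Iset q n. \<Sum>v\<in>words m (Kc q n i). mu v * G i v)"
proof -
  have "(\<Sum>u\<in>words m n. Pc u * (\<Prod>i\<in>Iset q n. G i (restrJ q i u)))
      = (\<Sum>u\<in>words m n. \<Prod>i\<in>Iset q n. (\<lambda>i v. mu v * G i v) i (restrJ q i u))"
    by (rule sum.cong[OF refl]) (simp add: Pc_prod prod.distrib)
  also have "\<dots> = (\<Prod>i\<in>Iset q n. \<Sum>v\<in>words m (Kc q n i). mu v * G i v)"
    by (rule prod_words[OF q2])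
  finally show ?thesis .
qed

lemma E1:
  assumes j: "j \<in> Iset q n"
  shows "(\<Sum>u\<in>words m n. Pc u * g (restrJ q j u)) = (\<Sum>v\<in>words m (Kc q n j). mu v * g v)"
proof -
  define G where "G i v = (if i = j then g v else 1)" for i v
  have "(\<Sum>u\<in>words m n. Pc u * g (restrJ q j u)) = (\<Sum>u\<in>words m n. Pc u * (\<Prod>i\<in>Iset q n. G i (restrJ q i u)))"
  proof (rule sum.cong[OF refl])
    fix u
    have "(\<Prod>i\<in>Iset q n. G i (restrJ q i u)) = (\<Prod>i\<in>Iset q n. if i = j then g (restrJ q i u) else 1)"
      by (simp add: G_def)
    also have "\<dots> = g (restrJ q j u)" using j by simp
    finally show "Pc u * g (restrJ q j u) = Pc u * (\<Prod>i\<in>Iset q n. G i (restrJ q i u))" by simp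
  qed
  also have "\<dots> = (\<Prod>i\<in>Iset q n. \<Sum>v\<in>words m (Kc q n i). mu v * G i v)" by (rule E_gen)
  also have "\<dots> = (\<Prod>i\<in>Iset q n. if i = j then (\<Sum>v\<in>words m (Kc q n j). mu v * g v) else 1)"
    by (rule prod.cong[OF refl]) (simp add: G_def sum_mu)
  also have "\<dots> = (\<Sum>v\<in>words m (Kc q n j). mu v * g v)" using j by simp
  finally show ?thesis .
qed

lemma E2:
  assumes j: "j \<in> Iset q n" and l: "l \<in> Iset q n" and jl: "j \<noteq> l"
  shows "(\<Sum>u\<in>words m n. Pc u * (g (restrJ q j u) * h (restrJ q l u)))
    = (\<Sum>v\<in>words m (Kc q n j). mu v * g v) * (\<Sum>v\<in>words m (Kc q n l). mu v * h v)"
proof -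
  define G where "G i v = (if i = j then g v else 1) * (if i = l then h v else 1)" for i v
  have "(\<Sum>u\<in>words m n. Pc u * (g (restrJ q j u) * h (restrJ q l u))) = (\<Sum>u\<in>words m n. Pc u * (\<Prod>i\<in>Iset q n. G i (restrJ q i u)))"
  proof (rule sum.cong[OF refl])
    fix u
    have "(\<Prod>i\<in>Iset q n. G i (restrJ q i u)) = (\<Prod>i\<in>Iset q n. if i = j then g (restrJ q i u) else 1) * (\<Prod>i\<in>Iset q n. if i = l then h (restrJ q i u) else 1)"
      by (simp add: G_def prod.distrib)
    also have "\<dots> = g (restrJ q j u) * h (restrJ q l u)" using j l by simp
    finally show "Pc u * (g (restrJ q j u) * h (restrJ q l u)) = Pc u * (\<Prod>i\<in>Iset q n. G i (restrJ q i u))" by simp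
  qed
  also have "\<dots> = (\<Prod>i\<in>Iset q n. \<Sum>v\<in>words m (Kc q n i). mu v * G i v)" by (rule E_gen)
  also have "\<dots> = (\<Prod>i\<in>Iset q n. (if i = j then (\<Sum>v\<in>words m (Kc q n j). mu v * g v) else 1)
        * (if i = l then (\<Sum>v\<in>words m (Kc q n l). mu v * h v) else 1))"
    by (rule prod.cong[OF refl]) (use jl in \<open>auto simp: G_def sum_mu\<close>)
  also have "\<dots> = (\<Sum>v\<in>words m (Kc q n j). mu v * g v) * (\<Sum>v\<in>words m (Kc q n l). mu v * h v)"
    using j l by (simp add: prod.distrib)
  finally show ?thesis .
qed

lemma M1: "(\<Sum>u\<in>words m n. Pc u * T n u) = aa n"
proof -
  have "(\<Sum>u\<in>words m n. Pc u * T n u) = (\<Sum>j\<in>Iset q n. \<Sum>u\<in>words m n. Pc u * phi (restrJ q j u))"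
    unfolding T_def by (simp add: sum_distrib_left sum.swap[of _ "Iset q n"])
  also have "\<dots> = aa n" unfolding aa_def Hk_def by (rule sum.cong[OF refl]) (rule E1)
  finally show ?thesis .
qed

lemma Z_center_gen:
  "(\<Sum>v\<in>words m k. mu v * (phi v - c)) = Hk k - c"
proof -
  have "(\<Sum>v\<in>words m k. mu v * (phi v - c)) = (\<Sum>v\<in>words m k. mu v * phi v) - c * (\<Sum>v\<in>words m k. mu v)"
    by (simp add: right_diff_distrib sum_subtractf sum_distrib_left mult.commute)
  thus ?thesis by (simp add: sum_mu Hk_def)
qed

lemma Z_center: "(\<Sum>v\<in>words m k. mu v * (phi v - Hk k)) = 0"
  by (simp add: Z_center_gen)

lemma Z_var_gen:
  "(\<Sum>v\<in>words m k. mu v * (phi v - c)^2) = Wk k - 2 * c * Hk k + c^2"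
proof -
  have "(\<Sum>v\<in>words m k. mu v * (phi v - c)^2)
      = (\<Sum>v\<in>words m k. mu v * (phi v)^2 - (2 * c) * (mu v * phi v) + c^2 * mu v)"
    by (rule sum.cong[OF refl]) (simp add: power2_diff algebra_simps)
  also have "\<dots> = (\<Sum>v\<in>words m k. mu v * (phi v)^2) - (2 * c) * (\<Sum>v\<in>words m k. mu v * phi v) + c^2 * (\<Sum>v\<in>words m k. mu v)"
    by (simp add: sum.distrib sum_subtractf sum_distrib_left)
  finally show ?thesis by (simp add: sum_mu Hk_def Wk_def)
qed

lemma Z_var: "(\<Sum>v\<in>words m k. mu v * (phi v - Hk k)^2) \<le> Wk k"
proof -
  have "(\<Sum>v\<in>words m k. mu v * (phi v - Hk k)^2) = Wk k - (Hk k)^2"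
    unfolding Z_var_gen by (simp add: power2_eq_square)
  thus ?thesis by simp
qed

lemma M2: "(\<Sum>u\<in>words m n. Pc u * (T n u - aa n)^2) \<le> (\<Sum>j\<in>Iset q n. Wk (Kc q n j))"
proof -
  define Z where "Z j v = phi v - Hk (Kc q n j)" for j v
  have TZ: "T n u - aa n = (\<Sum>j\<in>Iset q n. Z j (restrJ q j u))" for u
    by (simp add: T_def aa_def Z_def sum_subtractf)
  define X where "X j l = (\<Sum>u\<in>words m n. Pc u * (Z j (restrJ q j u) * Z l (restrJ q l u)))" for j l
  have "(\<Sum>u\<in>words m n. Pc u * (T n u - aa n)^2) = (\<Sum>j\<in>Iset q n. \<Sum>l\<in>Iset q n. X j l)"
    unfolding TZ X_def power2_eq_square sum_product
    by (simp add: sum_distrib_left sum.swap[of _ "words m n"])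
  also have "\<dots> = (\<Sum>j\<in>Iset q n. X j j)"
  proof (rule sum.cong[OF refl])
    fix j assume j: "j \<in> Iset q n"
    have "(\<Sum>l\<in>Iset q n. X j l) = (\<Sum>l\<in>Iset q n. if l = j then X j j else 0)"
    proof (rule sum.cong[OF refl])
      fix l assume l: "l \<in> Iset q n"
      show "X j l = (if l = j then X j j else 0)"
      proof (cases "l = j")
        case False
        have "X j l = (\<Sum>v\<in>words m (Kc q n j). mu v * Z j v) * (\<Sum>v\<in>words m (Kc q n l). mu v * Z l v)"
          unfolding X_def by (rule E2[OF j l]) (use False in auto)
        also have "\<dots> = 0" by (simp add: Z_def Z_center)
        finally show ?thesis using False by simp
      qed simp
    qed
    also have "\<dots> = X j j" using j by simp
    finally show "(\<Sum>l\<in>Iset q n. X j l) = X j j" .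
  qed
  also have "\<dots> \<le> (\<Sum>j\<in>Iset q n. Wk (Kc q n j))"
  proof (rule sum_mono)
    fix j assume j: "j \<in> Iset q n"
    have "X j j = (\<Sum>u\<in>words m n. Pc u * (Z j (restrJ q j u))^2)"
      by (simp add: X_def power2_eq_square)
    also have "\<dots> = (\<Sum>v\<in>words m (Kc q n j). mu v * (Z j v)^2)" by (rule E1[OF j])
    also have "\<dots> \<le> Wk (Kc q n j)" unfolding Z_def by (rule Z_var)
    finally show "X j j \<le> Wk (Kc q n j)" .
  qed
  finally show ?thesis .
qed

lemma Markov_T:
  assumes c: "c > 0"
  shows "measure P {x \<in> Sigma_sh m. c \<le> \<bar>T n (prefix_word x n) - aa n\<bar>} \<le> (\<Sum>j\<in>Iset q n. Wk (Kc q n j)) / c^2"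
proof -
  have "measure P {x \<in> Sigma_sh m. c \<le> \<bar>T n (prefix_word x n) - aa n\<bar>}
      = (\<Sum>u\<in>{u\<in>words m n. c \<le> \<bar>T n u - aa n\<bar>}. Pc u)"
    unfolding Pc_def
    by (rule cylset_measure[OF m2 setsP, where Q = "\<lambda>u. c \<le> \<bar>T n u - aa n\<bar>"]) (use probP in \<open>simp add: prob_space_def\<close>)
  also have "\<dots> \<le> (\<Sum>u\<in>{u\<in>words m n. c \<le> \<bar>T n u - aa n\<bar>}. Pc u * (T n u - aa n)^2 / c^2)"
  proof (rule sum_mono)
    fix u assume "u \<in> {u\<in>words m n. c \<le> \<bar>T n u - aa n\<bar>}"
    hence "c^2 \<le> \<bar>T n u - aa n\<bar>^2" using c by (intro power_mono) auto
    hence "1 \<le> (T n u - aa n)^2 / c^2" using c by simp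
    hence "Pc u * 1 \<le> Pc u * ((T n u - aa n)^2 / c^2)" using Pc_nonneg by (intro mult_left_mono) auto
    thus "Pc u \<le> Pc u * (T n u - aa n)^2 / c^2" by simp
  qed
  also have "\<dots> \<le> (\<Sum>u\<in>words m n. Pc u * (T n u - aa n)^2 / c^2)"
    by (rule sum_mono2) (use finite_words Pc_nonneg in auto)
  also have "\<dots> = (\<Sum>u\<in>words m n. Pc u * (T n u - aa n)^2) / c^2"
    by (simp add: sum_divide_distrib)
  also have "\<dots> \<le> (\<Sum>j\<in>Iset q n. Wk (Kc q n j)) / c^2"
    using M2 c by (simp add: divide_right_mono)
  finally show ?thesis .
qed

end


definition cnd :: "nat \<Rightarrow> nat \<Rightarrow> nat" where
  "cnd q x = card {j\<in>{1..x}. \<not> q dvd j}"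

definition Nc :: "nat \<Rightarrow> nat \<Rightarrow> nat \<Rightarrow> nat" where
  "Nc q n k = card {j\<in>Iset q n. Kc q n j = k}"

lemma cnd_eq:
  assumes q: "q \<ge> 2" shows "cnd q x = x - x div q"
proof -
  have qp: "0 < q" using q by simp
  have A: "{j\<in>{1..x}. q dvd j} = (\<lambda>t. q * t) ` {1..x div q}"
  proof
    show "{j\<in>{1..x}. q dvd j} \<subseteq> (\<lambda>t. q * t) ` {1..x div q}"
    proof
      fix j assume j: "j \<in> {j\<in>{1..x}. q dvd j}"
      hence j1: "1 \<le> j" and jx: "j \<le> x" and dv: "q dvd j" by simp_all
      from dv obtain t where t: "j = q * t" by (rule dvdE)
      have t1: "t \<ge> 1"
      proof (rule ccontr)
        assume "\<not> t \<ge> 1" hence "t = 0" by simp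
        thus False using t j1 by simp
      qed
      have "t * q \<le> x" using jx t by (simp add: mult.commute)
      hence "t \<le> x div q" using less_eq_div_iff_mult_less_eq[OF qp] by blast
      hence "t \<in> {1..x div q}" using t1 by simp
      thus "j \<in> (\<lambda>t. q * t) ` {1..x div q}" using t by blast
    qed
    show "(\<lambda>t. q * t) ` {1..x div q} \<subseteq> {j\<in>{1..x}. q dvd j}"
    proof
      fix j assume "j \<in> (\<lambda>t. q * t) ` {1..x div q}"
      then obtain t where tt: "t \<in> {1..x div q}" and t1: "j = q * t" by (rule imageE)
      from tt have t: "j = q * t" "1 \<le> t" "t \<le> x div q" using t1 by simp_all
      hence "t * q \<le> x" using less_eq_div_iff_mult_less_eq[OF qp] by blast
      hence "j \<le> x" using t(1) by (simp add: mult.commute)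
      moreover have "1 \<le> j" using t(1,2) qp by simp
      moreover have "q dvd j" using t(1) by simp
      ultimately show "j \<in> {j\<in>{1..x}. q dvd j}" by simp
    qed
  qed
  have inj: "inj_on (\<lambda>t. q * t) {1..x div q}" using qp by (simp add: inj_on_def)
  have c1: "card {j\<in>{1..x}. q dvd j} = x div q" unfolding A card_image[OF inj] by simp
  have "card {j\<in>{1..x}. q dvd j} + card {j\<in>{1..x}. \<not> q dvd j} = card {1..x}"
  proof -
    have u: "{j\<in>{1..x}. q dvd j} \<union> {j\<in>{1..x}. \<not> q dvd j} = {1..x}" by auto
    have "card ({j\<in>{1..x}. q dvd j} \<union> {j\<in>{1..x}. \<not> q dvd j}) = card {j\<in>{1..x}. q dvd j} + card {j\<in>{1..x}. \<not> q dvd j}"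
      by (rule card_Un_disjoint) auto
    thus ?thesis unfolding u by simp
  qed
  hence "x div q + cnd q x = x" using c1 by (simp add: cnd_def)
  thus ?thesis by simp
qed

lemma Kc_pos: "q \<ge> 2 \<Longrightarrow> j \<ge> 1 \<Longrightarrow> j \<le> n \<Longrightarrow> Kc q n j \<ge> 1"
  using Kc_le_iff[of q j 0 n] by simp

lemma Kc_le_n: "q \<ge> 2 \<Longrightarrow> j \<ge> 1 \<Longrightarrow> Kc q n j \<le> n"
  using Kc_props(3) by blast

lemma Kc_mono_i: assumes q: "q \<ge> 2" and j: "j \<ge> 1" shows "Kc q n j \<le> Kc q n 1"
proof (rule ccontr)
  assume "\<not> Kc q n j \<le> Kc q n 1"
  hence "Kc q n 1 < Kc q n j" by simp
  hence "q ^ Kc q n 1 * j \<le> n" using Kc_le_iff[OF q j] by blast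
  moreover have "q ^ Kc q n 1 * 1 \<le> q ^ Kc q n 1 * j" using j by simp
  ultimately have "q ^ Kc q n 1 * 1 \<le> n" by linarith
  thus False using Kc_le_iff[OF q, of 1 "Kc q n 1" n] by simp
qed

lemma Nc_set:
  assumes q: "q \<ge> 2"
  shows "{j\<in>Iset q n. Kc q n j = Suc k} =
    {j\<in>{1..n div q^k}. \<not> q dvd j} - {j\<in>{1..n div q^(Suc k)}. \<not> q dvd j}"
proof -
  have qk: "q ^ k > 0" "q ^ Suc k > 0" using q by auto
  have key: "Kc q n j = Suc k \<longleftrightarrow> (j * q^k \<le> n \<and> \<not> j * q ^ Suc k \<le> n)" if j: "j \<ge> 1" for j
  proof -
    have "Kc q n j = Suc k \<longleftrightarrow> (k < Kc q n j \<and> \<not> Suc k < Kc q n j)" by auto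
    also have "\<dots> \<longleftrightarrow> (q ^ k * j \<le> n \<and> \<not> q ^ Suc k * j \<le> n)"
      using Kc_le_iff[OF q j] by blast
    finally show ?thesis by (simp add: mult.commute)
  qed
  show ?thesis
  proof (intro set_eqI iffI)
    fix j assume "j \<in> {j\<in>Iset q n. Kc q n j = Suc k}"
    hence j: "1 \<le> j" "j \<le> n" "\<not> q dvd j" "Kc q n j = Suc k" by (auto simp: Iset_def)
    hence "j * q^k \<le> n" "\<not> j * q ^ Suc k \<le> n" using key by auto
    thus "j \<in> {j\<in>{1..n div q^k}. \<not> q dvd j} - {j\<in>{1..n div q^(Suc k)}. \<not> q dvd j}"
      using j qk by (simp add: less_eq_div_iff_mult_less_eq)
  next
    fix j assume "j \<in> {j\<in>{1..n div q^k}. \<not> q dvd j} - {j\<in>{1..n div q^(Suc k)}. \<not> q dvd j}"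
    hence j: "1 \<le> j" "j * q^k \<le> n" "\<not> j * q ^ Suc k \<le> n" "\<not> q dvd j"
      using qk by (auto simp: less_eq_div_iff_mult_less_eq)
    have "j \<le> j * q^k" using qk by simp
    hence "j \<le> n" using j by linarith
    thus "j \<in> {j\<in>Iset q n. Kc q n j = Suc k}" using j key by (auto simp: Iset_def)
  qed
qed

lemma div_div_pow: "(n::nat) div q ^ k div q = n div q ^ Suc k"
  by (simp only: power_Suc2 div_mult2_eq)

lemma Nc_formula:
  assumes q: "q \<ge> 2"
  shows "real (Nc q n (Suc k)) = real (n div q^k) - 2 * real (n div q^Suc k) + real (n div q^Suc (Suc k))"
proof -
  define B where "B = n div q^k"
  define A where "A = n div q^Suc k"
  define C where "C = n div q^Suc (Suc k)"
  have BA: "B div q = A" unfolding A_def B_def by (rule div_div_pow)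
  have AC: "A div q = C" unfolding A_def C_def by (rule div_div_pow)
  have sub: "{j\<in>{1..A}. \<not> q dvd j} \<subseteq> {j\<in>{1..B}. \<not> q dvd j}"
  proof -
    have "A \<le> B" unfolding BA[symmetric] by simp
    thus ?thesis by auto
  qed
  have "Nc q n (Suc k) = cnd q B - cnd q A"
    unfolding Nc_def Nc_set[OF q] cnd_def A_def B_def
    by (rule card_Diff_subset) (use sub in \<open>auto simp: A_def B_def\<close>)
  also have "\<dots> = (B - A) - (A - C)" using cnd_eq[OF q] BA AC by simp
  finally have "Nc q n (Suc k) = (B - A) - (A - C)" .
  moreover have "A \<le> B" "C \<le> A" unfolding BA[symmetric] AC[symmetric] by simp_all
  moreover have "A - C \<le> B - A"
  proof -
    have "cnd q A \<le> cnd q B" unfolding cnd_def using sub by (intro card_mono) auto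
    thus ?thesis using cnd_eq[OF q] BA AC by simp
  qed
  ultimately show ?thesis unfolding A_def[symmetric] B_def[symmetric] C_def[symmetric]
    by (simp add: of_nat_diff)
qed

lemma real_div_bounds:
  assumes d: "d > 0"
  shows "real n / real d - 1 < real (n div d)" "real (n div d) \<le> real n / real d"
proof -
  have e: "n = n div d * d + n mod d" by simp
  have "n mod d < d" using d by simp
  hence "n < n div d * d + d" using e by linarith
  hence "real n < real (n div d) * real d + real d" by (metis of_nat_add of_nat_less_iff of_nat_mult)
  hence "real n < (real (n div d) + 1) * real d" by (simp add: algebra_simps)
  thus "real n / real d - 1 < real (n div d)" using d by (simp add: field_simps)
  have "real (n div d) * real d \<le> real n" by (simp flip: of_nat_mult)
  thus "real (n div d) \<le> real n / real d" using d by (simp add: field_simps)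
qed

lemma Nc_approx:
  assumes q: "q \<ge> 2"
  shows "\<bar>real (Nc q n (Suc k)) - real n * (real q - 1)^2 / real q ^ (k + 2)\<bar> \<le> 2"
proof -
  define x where "x = real n / real q ^ k"
  have qp: "real q > 0" using q by simp
  have b1: "x - 1 < real (n div q^k)" "real (n div q^k) \<le> x"
    using real_div_bounds[of "q^k" n] q unfolding x_def by auto
  have b2: "x / q - 1 < real (n div q^Suc k)" "real (n div q^Suc k) \<le> x / q"
    using real_div_bounds[of "q^Suc k" n] q unfolding x_def by (auto simp: field_simps)
  have b3: "x / q^2 - 1 < real (n div q^Suc (Suc k))" "real (n div q^Suc (Suc k)) \<le> x / q^2"
    using real_div_bounds[of "q^Suc (Suc k)" n] q unfolding x_def by (auto simp: field_simps power2_eq_square)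
  have t: "real n * (real q - 1)^2 / real q ^ (k + 2) = x - 2 * (x / q) + x / q^2"
    unfolding x_def using qp by (simp add: field_simps power2_eq_square)
  show ?thesis unfolding Nc_formula[OF q] t using b1 b2 b3 by linarith
qed

lemma Nc_le:
  assumes q: "q \<ge> 2"
  shows "real (Nc q n (Suc k)) \<le> real n / real q ^ k"
proof -
  have "Nc q n (Suc k) \<le> card {j\<in>{1..n div q^k}. \<not> q dvd j}"
    unfolding Nc_def Nc_set[OF q] by (rule card_mono) auto
  also have "\<dots> \<le> card {1..n div q^k}" by (rule card_mono) auto
  finally have "real (Nc q n (Suc k)) \<le> real (n div q^k)" by simp
  also have "\<dots> \<le> real n / real q ^ k" using real_div_bounds(2)[of "q^k" n] q by simp
  finally show ?thesis .
qed

lemma Nc_zero: assumes q: "q \<ge> 2" and k: "k > n" shows "Nc q n k = 0"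
proof -
  have "{j\<in>Iset q n. Kc q n j = k} = {}"
  proof (intro equalityI subsetI)
    fix j assume "j \<in> {j\<in>Iset q n. Kc q n j = k}"
    hence "j \<ge> 1" "Kc q n j = k" by (auto simp: Iset_def)
    thus "j \<in> {}" using Kc_le_n[OF q, of j n] k by simp
  qed simp
  thus ?thesis by (simp add: Nc_def)
qed


context PS
begin

lemma lnm: "ln (real m) \<ge> 2/3" "ln (real m) > 0"
proof -
  have "ln (2::real) \<le> ln (real m)" using m2 by simp
  thus "ln (real m) \<ge> 2/3" using ln2_ge_two_thirds by linarith
  thus "ln (real m) > 0" by simp
qed

lemma phi_eq: "phi v = - ln (mu v) / ln (real m)"
  by (simp add: phi_def log_def)

lemma phi_nonneg: "0 \<le> phi v"
proof (cases "mu v = 0")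
  case True thus ?thesis by (simp add: phi_eq)
next
  case False
  hence "0 < mu v" using mu_nonneg[of v] by simp
  hence "ln (mu v) \<le> 0" using mu_le1[of v] by simp
  thus ?thesis using lnm by (simp add: phi_eq divide_nonpos_pos)
qed

lemma Hk_nonneg: "0 \<le> Hk k"
  unfolding Hk_def by (rule sum_nonneg) (simp add: mu_nonneg phi_nonneg)

lemma Hk_le: "Hk k \<le> 2 * real k + 3"
proof -
  define N where "N = real m ^ k"
  have N1: "N \<ge> 1" using m2 by (simp add: N_def)
  have cN: "real (card (words m k)) \<le> N" by (simp add: card_words N_def)
  have "(\<Sum>v\<in>words m k. - mu v * ln (mu v)) \<le> 2 * ln N + 2"
    by (rule sum_bound1[OF finite_words cN N1]) (simp_all add: mu_nonneg mu_le1 sum_mu)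
  moreover have "Hk k = (\<Sum>v\<in>words m k. - mu v * ln (mu v)) / ln (real m)"
    unfolding Hk_def phi_eq by (simp add: sum_divide_distrib)
  moreover have "ln N = real k * ln (real m)" using m2 by (simp add: N_def ln_realpow)
  ultimately have "Hk k \<le> (2 * (real k * ln (real m)) + 2) / ln (real m)"
    using lnm by (simp add: divide_right_mono)
  also have "\<dots> = 2 * real k + 2 / ln (real m)" using lnm by (simp add: field_simps)
  also have "2 / ln (real m) \<le> 3"
    using lnm by (simp add: field_simps)
  finally show ?thesis by simp
qed

lemma Wk_le: "Wk k \<le> 4 * (real k)^2 + 18"
proof -
  define N where "N = real m ^ k"
  have N1: "N \<ge> 1" using m2 by (simp add: N_def)
  have cN: "real (card (words m k)) \<le> N" by (simp add: card_words N_def)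
  have "(\<Sum>v\<in>words m k. mu v * (ln (mu v))^2) \<le> 4 * (ln N)^2 + 8"
    by (rule sum_bound2[OF finite_words cN N1]) (simp_all add: mu_nonneg mu_le1 sum_mu)
  moreover have "Wk k = (\<Sum>v\<in>words m k. mu v * (ln (mu v))^2) / (ln (real m))^2"
    unfolding Wk_def phi_eq by (simp add: sum_divide_distrib power_divide)
  moreover have "ln N = real k * ln (real m)" using m2 by (simp add: N_def ln_realpow)
  ultimately have "Wk k \<le> (4 * (real k * ln (real m))^2 + 8) / (ln (real m))^2"
    using lnm by (simp add: divide_right_mono)
  also have "\<dots> = 4 * (real k)^2 + 8 / (ln (real m))^2" using lnm by (simp add: field_simps)
  also have "8 / (ln (real m))^2 \<le> 18"
  proof -
    have "(2/3)^2 \<le> (ln (real m))^2" using lnm by (intro power_mono) auto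
    hence l: "4/9 \<le> (ln (real m))^2" by (simp add: power2_eq_square)
    hence pos: "0 < (ln (real m))^2" by linarith
    have "8 \<le> 18 * (ln (real m))^2" using l by linarith
    thus ?thesis using pos by (simp add: divide_le_eq)
  qed
  finally show ?thesis by simp
qed

lemma aa_group: "aa n = (\<Sum>k<n. real (Nc q n (Suc k)) * Hk (Suc k))"
proof -
  have img: "Kc q n ` Iset q n \<subseteq> {1..n}"
  proof
    fix y assume "y \<in> Kc q n ` Iset q n"
    then obtain j where j: "j \<in> Iset q n" and y: "y = Kc q n j" by (rule imageE)
    have "1 \<le> j" "j \<le> n" using j by (auto simp: Iset_def)
    thus "y \<in> {1..n}" using y Kc_pos[OF q2] Kc_le_n[OF q2] by simp
  qed
  have "aa n = (\<Sum>y\<in>{1..n}. \<Sum>j\<in>{j \<in> Iset q n. Kc q n j = y}. Hk (Kc q n j))"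
    unfolding aa_def by (rule sum.group[symmetric]) (use img in auto)
  also have "\<dots> = (\<Sum>y\<in>{1..n}. real (Nc q n y) * Hk y)"
  proof (rule sum.cong[OF refl])
    fix y
    have "(\<Sum>j\<in>{j \<in> Iset q n. Kc q n j = y}. Hk (Kc q n j)) = (\<Sum>j\<in>{j \<in> Iset q n. Kc q n j = y}. Hk y)"
      by (rule sum.cong) auto
    thus "(\<Sum>j\<in>{j \<in> Iset q n. Kc q n j = y}. Hk (Kc q n j)) = real (Nc q n y) * Hk y"
      by (simp add: Nc_def)
  qed
  also have "\<dots> = (\<Sum>k<n. real (Nc q n (Suc k)) * Hk (Suc k))"
    by (simp add: sum.atLeast1_atMost_eq)
  finally show ?thesis .
qed

end


context PS
begin

lemma sets_mu_eq: "A \<in> sets \<mu> \<longleftrightarrow> A \<in> sets (borel_Sigma m)" using sets\<mu> by simp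

lemma cyl_mu_sets: "cyl m v \<in> sets \<mu>" using cyl_sets[OF m2] sets\<mu> by simp

lemma Omega_sets: "\<Omega> \<in> sets \<mu>"
proof -
  have sub: "\<Omega> \<subseteq> Sigma_sh m" and op: "Sopen m (Sigma_sh m - \<Omega>)" using \<Omega>cl by (auto simp: Sclosed_def)
  have "Sigma_sh m - \<Omega> \<in> sets (borel_Sigma m)" by (rule Sopen_in_sets[OF op])
  hence "space (borel_Sigma m) - (Sigma_sh m - \<Omega>) \<in> sets (borel_Sigma m)" by (rule sets.compl_sets)
  moreover have "space (borel_Sigma m) - (Sigma_sh m - \<Omega>) = \<Omega>" using sub by auto
  ultimately show ?thesis using sets\<mu> by simp
qed

lemma Omega_sub: "\<Omega> \<subseteq> Sigma_sh m" using \<Omega>cl by (simp add: Sclosed_def)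

lemma compl_null: "Sigma_sh m - \<Omega> \<in> null_sets \<mu>"
proof -
  interpret prob_space \<mu> by (rule prob\<mu>)
  have "prob \<Omega> = 1" using \<mu>\<Omega> by (simp add: emeasure_eq_measure)
  hence "prob (space \<mu> - \<Omega>) = 0" using prob_compl[OF Omega_sets] by simp
  moreover have "space \<mu> - \<Omega> \<in> sets \<mu>" using Omega_sets by auto
  ultimately show ?thesis using space_mu by (simp add: emeasure_eq_measure null_sets_def)
qed

lemma mu_Omega: "measure \<mu> (\<Omega> \<inter> cyl m v) = mu v"
proof -
  have "cyl m v - (Sigma_sh m - \<Omega>) = \<Omega> \<inter> cyl m v" using cyl_subset by blast
  moreover have "measure \<mu> (cyl m v - (Sigma_sh m - \<Omega>)) = measure \<mu> (cyl m v)"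
    by (rule measure_Diff_null_set[OF cyl_mu_sets compl_null])
  ultimately show ?thesis by (simp add: mu_def)
qed

lemma Hk_entropy: "Hk k = entropy_m m \<mu> (alpha m \<Omega> k)"
proof -
  define S where "S = {u\<in>words m k. \<Omega> \<inter> cyl m u \<noteq> {}}"
  have al: "alpha m \<Omega> k = (\<lambda>u. \<Omega> \<inter> cyl m u) ` S"
    unfolding alpha_def S_def by auto
  have inj: "inj_on (\<lambda>u. \<Omega> \<inter> cyl m u) S"
  proof (rule inj_onI)
    fix u v assume u: "u \<in> S" and v: "v \<in> S" and e: "\<Omega> \<inter> cyl m u = \<Omega> \<inter> cyl m v"
    show "u = v"
    proof (rule ccontr)
      assume "u \<noteq> v"
      hence "cyl m u \<inter> cyl m v = {}" using u v cyl_disjoint[of u m k v] by (simp add: S_def)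
      hence "\<Omega> \<inter> cyl m u = {}" using e by blast
      thus False using u by (simp add: S_def)
    qed
  qed
  have fS: "finite S" unfolding S_def using finite_words by simp
  have "entropy_m m \<mu> (alpha m \<Omega> k) = - (\<Sum>u\<in>S. (if mu u = 0 then 0 else mu u * log (real m) (mu u)))"
    unfolding entropy_m_def al sum.reindex[OF inj] comp_def mu_Omega ..
  also have "\<dots> = (\<Sum>u\<in>S. - (if mu u = 0 then 0 else mu u * log (real m) (mu u)))"
    by (simp add: sum_negf)
  also have "\<dots> = (\<Sum>u\<in>S. mu u * phi u)"
    by (rule sum.cong) (auto simp: phi_def)
  also have "\<dots> = Hk k" unfolding Hk_def
  proof (rule sum.mono_neutral_left[OF finite_words])
    show "S \<subseteq> words m k" by (auto simp: S_def)
    show "\<forall>i\<in>words m k - S. mu i * phi i = 0"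
    proof
      fix u assume "u \<in> words m k - S"
      hence "\<Omega> \<inter> cyl m u = {}" by (simp add: S_def)
      hence "mu u = 0" using mu_Omega[of u] by simp
      thus "mu u * phi u = 0" by simp
    qed
  qed
  finally show ?thesis by simp
qed

lemma s_val_eq: "s_val m q \<Omega> \<mu> = (real q - 1)^2 * (\<Sum>k. Hk (Suc k) / real q ^ (k + 2))"
  unfolding s_val_def by (simp add: Hk_entropy)

lemma M_summable: "summable (\<lambda>k. (2 * real k + 5) / real q ^ k)"
proof (rule summable_ratio_test[where c = "7/10" and N = 0])
  fix k :: nat
  have q: "real q \<ge> 2" using q2 by simp
  have "(2 * real (Suc k) + 5) * 10 \<le> 7 * (2 * real k + 5) * 2" by simp
  also have "\<dots> \<le> 7 * (2 * real k + 5) * real q" using q by (intro mult_left_mono) auto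
  finally have a: "(2 * real (Suc k) + 5) * 10 \<le> 7 * (2 * real k + 5) * real q" .
  have qk: "real q ^ k > 0" using q by simp
  have qp: "real q > 0" using q by simp
  have b: "(2 * real (Suc k) + 5) / real q \<le> 7 / 10 * (2 * real k + 5)"
    using a qp by (simp add: divide_le_eq algebra_simps)
  have "(2 * real (Suc k) + 5) / real q ^ Suc k = ((2 * real (Suc k) + 5) / real q) / real q ^ k"
    by (simp add: field_simps)
  also have "\<dots> \<le> (7 / 10 * (2 * real k + 5)) / real q ^ k"
    by (rule divide_right_mono[OF b]) (use qk in simp)
  finally have "(2 * real (Suc k) + 5) / real q ^ Suc k \<le> 7 / 10 * ((2 * real k + 5) / real q ^ k)"
    by simp
  thus "norm ((2 * real (Suc k) + 5) / real q ^ Suc k) \<le> 7 / 10 * norm ((2 * real k + 5) / real q ^ k)"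
    using qk by simp
qed simp

lemma aa_lim: "(\<lambda>n. aa n / real n) \<longlonglongrightarrow> s_val m q \<Omega> \<mu>"
proof -
  define f where "f k n = real (Nc q n (Suc k)) * Hk (Suc k) / real n" for k n
  define c where "c k = (real q - 1)^2 / real q ^ (k + 2) * Hk (Suc k)" for k
  define M where "M k = (2 * real k + 5) / real q ^ k" for k
  have qpos: "real q > 0" using q2 by simp
  have eq: "aa n / real n = (\<Sum>k. f k n)" for n
  proof -
    have "(\<Sum>k. f k n) = (\<Sum>k<n. f k n)"
      by (rule suminf_finite) (auto simp: f_def Nc_zero[OF q2])
    also have "\<dots> = aa n / real n" unfolding aa_group f_def by (simp add: sum_divide_distrib)
    finally show ?thesis by simp
  qed
  have lim: "(\<lambda>n. f k n) \<longlonglongrightarrow> c k" for k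
  proof -
    define cc where "cc = (real q - 1)^2 / real q ^ (k + 2)"
    have "(\<lambda>n. real (Nc q n (Suc k)) / real n - cc) \<longlonglongrightarrow> 0"
    proof (rule Lim_null_comparison)
      show "\<forall>\<^sub>F n in sequentially. norm (real (Nc q n (Suc k)) / real n - cc) \<le> 2 / real n"
      proof (rule eventually_sequentiallyI[of 1])
        fix n :: nat assume n: "n \<ge> 1"
        hence np: "real n > 0" by simp
        have "real (Nc q n (Suc k)) / real n - cc = (real (Nc q n (Suc k)) - real n * cc) / real n"
          using np by (simp add: field_simps)
        moreover have "\<bar>real (Nc q n (Suc k)) - real n * cc\<bar> \<le> 2"
          using Nc_approx[OF q2, of n k] by (simp add: cc_def)
        ultimately show "norm (real (Nc q n (Suc k)) / real n - cc) \<le> 2 / real n"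
          using np by (simp add: divide_right_mono)
      qed
      show "(\<lambda>n. 2 / real n) \<longlonglongrightarrow> 0" by (rule lim_const_over_n)
    qed
    hence "(\<lambda>n. real (Nc q n (Suc k)) / real n) \<longlonglongrightarrow> cc"
      by (simp add: LIM_zero_iff)
    hence "(\<lambda>n. real (Nc q n (Suc k)) / real n * Hk (Suc k)) \<longlonglongrightarrow> cc * Hk (Suc k)"
      by (rule tendsto_mult_right)
    thus ?thesis by (simp add: f_def c_def cc_def)
  qed
  have bound: "norm (f k n) \<le> M k" for k n
  proof (cases "n = 0")
    case True thus ?thesis using qpos by (simp add: f_def M_def)
  next
    case False
    hence np: "real n > 0" by simp
    have "f k n \<ge> 0" by (simp add: f_def Hk_nonneg)
    moreover have "f k n \<le> (real n / real q ^ k) * Hk (Suc k) / real n"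
      unfolding f_def using Nc_le[OF q2, of n k] Hk_nonneg np by (intro divide_right_mono mult_right_mono) auto
    moreover have "(real n / real q ^ k) * Hk (Suc k) / real n = Hk (Suc k) / real q ^ k" using np by simp
    moreover have "Hk (Suc k) / real q ^ k \<le> M k"
      unfolding M_def using Hk_le[of "Suc k"] qpos by (intro divide_right_mono) auto
    ultimately show ?thesis by simp
  qed
  have bound': "\<bar>f k n\<bar> \<le> M k" for k n using bound[of k n] by simp
  have T: "eventually (\<lambda>n. summable (\<lambda>k. norm (f k n))) sequentially \<and> summable (\<lambda>k. norm (c k)) \<and>
      ((\<lambda>n. suminf (\<lambda>k. f k n)) \<longlonglongrightarrow> suminf c)"
    by (rule tannerys_theorem[OF lim _ M_summable[folded M_def]])
       (auto intro!: always_eventually simp: bound')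
  have sc: "summable c" using T summable_norm_cancel by blast
  have q1: "1 \<le> real q * real q"
  proof -
    have "1 * 1 \<le> real q * real q" by (rule mult_mono) (use q2 in auto)
    thus ?thesis by simp
  qed
  have sh: "summable (\<lambda>k. Hk (Suc k) / real q ^ (k + 2))"
  proof (rule summable_comparison_test[OF _ M_summable])
    show "\<exists>N. \<forall>n\<ge>N. norm (Hk (Suc n) / real q ^ (n + 2)) \<le> (2 * real n + 5) / real q ^ n"
    proof (intro exI allI impI)
      fix n :: nat
      have "Hk (Suc n) / real q ^ (n + 2) \<le> Hk (Suc n) / real q ^ n"
        using Hk_nonneg qpos q2 q1 by (intro divide_left_mono) (auto intro!: power_increasing)
      also have "\<dots> \<le> (2 * real n + 5) / real q ^ n"
        using Hk_le[of "Suc n"] qpos by (intro divide_right_mono) auto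
      finally show "norm (Hk (Suc n) / real q ^ (n + 2)) \<le> (2 * real n + 5) / real q ^ n"
        using Hk_nonneg by simp
    qed
  qed
  have "suminf c = (real q - 1)^2 * (\<Sum>k. Hk (Suc k) / real q ^ (k + 2))"
    unfolding c_def using suminf_mult[OF sh, of "(real q - 1)^2"] by (simp add: field_simps)
  hence "suminf c = s_val m q \<Omega> \<mu>" by (simp add: s_val_eq)
  thus ?thesis using T eq by simp
qed

end


lemma sq_le_pow2: "(Suc t)^2 \<le> 4 * 2^t"
proof (induction t)
  case 0 thus ?case by simp
next
  case (Suc t)
  have "Suc t < 2 ^ Suc t" by (rule less_exp)
  hence a: "2 * t + 3 \<le> 4 * 2 ^ t" by simp
  have "(Suc (Suc t))^2 = (Suc t)^2 + (2 * t + 3)" by (simp add: power2_eq_square)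
  also have "\<dots> \<le> 4 * 2^t + 4 * 2^t" using Suc.IH a by linarith
  also have "\<dots> = 4 * 2 ^ Suc t" by simp
  finally show ?case .
qed

lemma Kc_bound:
  assumes q: "q \<ge> 2"
  shows "(Kc q ((Suc j)^4) 1)^2 \<le> 64 * Suc j"
proof -
  define K where "K = Kc q ((Suc j)^4) 1"
  have K1: "K \<ge> 1" unfolding K_def by (rule Kc_pos[OF q]) auto
  define r where "r = K - 1"
  have "r < K" using K1 by (simp add: r_def)
  hence "q ^ r * 1 \<le> (Suc j)^4" using Kc_le_iff[OF q, of 1 r] by (simp add: K_def)
  moreover have "2 ^ r \<le> q ^ r" using q by (simp add: power_mono)
  ultimately have r2: "2 ^ r \<le> (Suc j)^4" by simp
  define t where "t = r div 4"
  have "4 * t \<le> r" by (simp add: t_def)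
  hence p: "2 ^ (4 * t) \<le> (2::nat) ^ r" by (simp add: power_increasing)
  have "(2 ^ t)^4 = (2::nat) ^ (4 * t)" by (simp add: power_mult[symmetric] mult.commute)
  hence "(2 ^ t)^4 \<le> (Suc j)^4" using p r2 by linarith
  hence tj: "2 ^ t \<le> Suc j" using power_le_imp_le_base[of "2^t" 3 "Suc j"] by (simp add: numeral_eq_Suc)
  have "K \<le> 4 * Suc t" using K1 by (simp add: r_def t_def)
  hence "K^2 \<le> (4 * Suc t)^2" by (simp add: power_mono)
  also have "\<dots> = 16 * (Suc t)^2" unfolding power_mult_distrib by simp
  also have "\<dots> \<le> 16 * (4 * 2^t)" using sq_le_pow2[of t] by simp
  also have "\<dots> \<le> 64 * Suc j" using tj by simp
  finally show ?thesis by (simp add: K_def)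
qed

lemma nn_ratio: "(\<lambda>j. real ((Suc (Suc j))^4) / real ((Suc j)^4)) \<longlonglongrightarrow> 1"
proof -
  have "(\<lambda>j. 1 + 1 / real (Suc j)) \<longlonglongrightarrow> 1 + 0"
    by (intro tendsto_add tendsto_const) (rule LIMSEQ_Suc[OF lim_const_over_n])
  hence "(\<lambda>j. (1 + 1 / real (Suc j))^4) \<longlonglongrightarrow> (1 + 0)^4" by (rule tendsto_power)
  moreover have "(1 + 1 / real (Suc j))^4 = real ((Suc (Suc j))^4) / real ((Suc j)^4)" for j
  proof -
    have "1 + 1 / real (Suc j) = real (Suc (Suc j)) / real (Suc j)" by (simp add: field_simps)
    thus ?thesis by (simp add: power_divide)
  qed
  ultimately show ?thesis by simp
qed

lemma sandwich_sub:
  fixes f :: "nat \<Rightarrow> real"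
  assumes mono: "\<And>n. f n \<le> f (Suc n)" and nonneg: "\<And>n. 0 \<le> f n"
    and lim: "(\<lambda>j. f ((Suc j)^4) / real ((Suc j)^4)) \<longlonglongrightarrow> s"
  shows "(\<lambda>n. f n / real n) \<longlonglongrightarrow> s"
proof -
  define nn :: "nat \<Rightarrow> nat" where "nn j = (Suc j)^4" for j
  have inc: "incseq f" by (rule incseq_SucI) (rule mono)
  have nn_gt: "n < nn (Suc n)" for n
  proof -
    have "n < Suc (Suc n)" by simp
    also have "\<dots> \<le> (Suc (Suc n))^4" by (rule self_le_power) auto
    finally show ?thesis by (simp add: nn_def)
  qed
  have nn_mono: "a \<le> b \<Longrightarrow> nn a \<le> nn b" for a b by (simp add: nn_def power_mono)
  have nn_pos: "nn j > 0" for j by (simp add: nn_def)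
  define J where "J n = (LEAST j. n < nn (Suc j))" for n
  have J1: "n < nn (Suc (J n))" for n
    unfolding J_def by (rule LeastI_ex) (use nn_gt in blast)
  have J2: "nn (J n) \<le> n" if n: "n \<ge> 1" for n
  proof (cases "J n")
    case 0 thus ?thesis using n by (simp add: nn_def)
  next
    case (Suc i)
    have "\<not> n < nn (Suc i)"
    proof
      assume "n < nn (Suc i)"
      hence "J n \<le> i" unfolding J_def by (rule Least_le)
      thus False using Suc by simp
    qed
    thus ?thesis using Suc by simp
  qed
  have Jlim: "filterlim J at_top sequentially"
    unfolding filterlim_at_top
  proof (intro allI)
    fix Z
    show "eventually (\<lambda>n. Z \<le> J n) sequentially"
    proof (rule eventually_sequentiallyI[of "nn Z"])
      fix n assume n: "nn Z \<le> n"
      show "Z \<le> J n"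
      proof (rule ccontr)
        assume "\<not> Z \<le> J n"
        hence "Suc (J n) \<le> Z" by simp
        hence "nn (Suc (J n)) \<le> nn Z" by (rule nn_mono)
        thus False using J1[of n] n by simp
      qed
    qed
  qed
  define g1 where "g1 j = f (nn j) / real (nn j) * (real (nn j) / real (nn (Suc j)))" for j
  define g2 where "g2 j = f (nn (Suc j)) / real (nn (Suc j)) * (real (nn (Suc j)) / real (nn j))" for j
  have r1: "(\<lambda>j. real (nn (Suc j)) / real (nn j)) \<longlonglongrightarrow> 1"
    using nn_ratio by (simp add: nn_def)
  have r2: "(\<lambda>j. real (nn j) / real (nn (Suc j))) \<longlonglongrightarrow> 1"
    using tendsto_inverse[OF r1] by (simp add: inverse_eq_divide)
  have l0: "(\<lambda>j. f (nn j) / real (nn j)) \<longlonglongrightarrow> s" using lim by (simp add: nn_def)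
  have g1l: "g1 \<longlonglongrightarrow> s" unfolding g1_def using tendsto_mult[OF l0 r2] by simp
  have g2l: "g2 \<longlonglongrightarrow> s" unfolding g2_def using tendsto_mult[OF LIMSEQ_Suc[OF l0] r1] by simp
  have g1J: "(\<lambda>n. g1 (J n)) \<longlonglongrightarrow> s" by (rule filterlim_compose[OF g1l Jlim])
  have g2J: "(\<lambda>n. g2 (J n)) \<longlonglongrightarrow> s" by (rule filterlim_compose[OF g2l Jlim])
  show ?thesis
  proof (rule tendsto_sandwich[OF _ _ g1J g2J])
    show "\<forall>\<^sub>F n in sequentially. g1 (J n) \<le> f n / real n"
    proof (rule eventually_sequentiallyI[of 1])
      fix n :: nat assume n: "1 \<le> n"
      have a: "nn (J n) \<le> n" by (rule J2[OF n])
      have b: "n < nn (Suc (J n))" by (rule J1)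
      have "g1 (J n) = f (nn (J n)) / real (nn (Suc (J n)))" using nn_pos by (simp add: g1_def)
      also have "\<dots> \<le> f (nn (J n)) / real n"
        using b n nonneg by (intro divide_left_mono) auto
      also have "\<dots> \<le> f n / real n"
        using incseqD[OF inc a] n by (intro divide_right_mono) auto
      finally show "g1 (J n) \<le> f n / real n" .
    qed
    show "\<forall>\<^sub>F n in sequentially. f n / real n \<le> g2 (J n)"
    proof (rule eventually_sequentiallyI[of 1])
      fix n :: nat assume n: "1 \<le> n"
      have a: "nn (J n) \<le> n" by (rule J2[OF n])
      have b: "n < nn (Suc (J n))" by (rule J1)
      have "f n / real n \<le> f (nn (Suc (J n))) / real n"
        using incseqD[OF inc, of n "nn (Suc (J n))"] b n by (intro divide_right_mono) auto
      also have "\<dots> \<le> f (nn (Suc (J n))) / real (nn (J n))"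
        using a nn_pos[of "J n"] nonneg by (intro divide_left_mono) auto
      also have "\<dots> = g2 (J n)" using nn_pos by (simp add: g2_def)
      finally show "f n / real n \<le> g2 (J n)" .
    qed
  qed
qed


lemma cyl_prefix_mono:
  assumes "n \<le> n'" shows "cyl m (prefix_word x n') \<subseteq> cyl m (prefix_word x n)"
proof
  fix y assume y: "y \<in> cyl m (prefix_word x n')"
  have yx: "y j = x j" if "j \<in> {1..n'}" for j
  proof -
    have "y j = prefix_word x n' ! (j - 1)" using y that by (auto simp: cyl_def)
    also have "\<dots> = x j" using that by (subst prefix_word_nth) auto
    finally show ?thesis .
  qed
  show "y \<in> cyl m (prefix_word x n)" unfolding cyl_def
  proof (safe)
    show "y \<in> Sigma_sh m" using y by (simp add: cyl_def)
    fix j assume j: "j \<in> {1..length (prefix_word x n)}"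
    hence "j \<in> {1..n'}" using assms by simp
    hence "y j = x j" by (rule yx)
    also have "\<dots> = prefix_word x n ! (j - 1)" using j by (subst prefix_word_nth) auto
    finally show "y j = prefix_word x n ! (j - 1)" .
  qed
qed

context PS
begin

lemma var_bound:
  "(\<Sum>i\<in>Iset q n. Wk (Kc q n i)) \<le> real n * (4 * real ((Kc q n 1)^2) + 18)"
proof -
  have "(\<Sum>i\<in>Iset q n. Wk (Kc q n i)) \<le> real (card (Iset q n)) * (4 * real ((Kc q n 1)^2) + 18)"
  proof (rule sum_bounded_above)
    fix i assume i: "i \<in> Iset q n"
    hence "i \<ge> 1" by (simp add: Iset_def)
    hence "Kc q n i \<le> Kc q n 1" by (rule Kc_mono_i[OF q2])
    hence "(Kc q n i)^2 \<le> (Kc q n 1)^2" by (simp add: power_mono)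
    hence "4 * (real (Kc q n i))^2 + 18 \<le> 4 * real ((Kc q n 1)^2) + 18"
      by (simp flip: of_nat_power)
    thus "Wk (Kc q n i) \<le> 4 * real ((Kc q n 1)^2) + 18" using Wk_le[of "Kc q n i"] by linarith
  qed
  also have "\<dots> \<le> real n * (4 * real ((Kc q n 1)^2) + 18)"
  proof (rule mult_right_mono)
    have "card (Iset q n) \<le> card {1..n}" unfolding Iset_def by (rule card_mono) auto
    thus "real (card (Iset q n)) \<le> real n" by simp
  qed simp
  finally show ?thesis .
qed

definition bad where
  "bad e j = {x \<in> Sigma_sh m. e * real ((Suc j)^4) \<le> \<bar>T ((Suc j)^4) (prefix_word x ((Suc j)^4)) - aa ((Suc j)^4)\<bar>}"

lemma bad_sets: "bad e j \<in> sets P"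
  unfolding bad_def using cylset_sets[OF m2] setsP by simp

lemma bad_measure:
  assumes e: "e > 0"
  shows "measure P (bad e j) \<le> 274 / e^2 * inverse (real (Suc j)^2)"
proof -
  define n where "n = (Suc j)^4"
  have np: "real n > 0" by (simp add: n_def)
  have rn: "real n = real (Suc j)^4" by (simp add: n_def)
  have "measure P (bad e j) \<le> (\<Sum>i\<in>Iset q n. Wk (Kc q n i)) / (e * real n)^2"
    unfolding bad_def n_def[symmetric] by (rule Markov_T) (use e np in simp)
  also have "\<dots> \<le> real n * (4 * real ((Kc q n 1)^2) + 18) / (e * real n)^2"
    by (rule divide_right_mono[OF var_bound]) simp
  also have "\<dots> \<le> real n * (274 * real (Suc j)) / (e * real n)^2"
  proof -
    have "(Kc q n 1)^2 \<le> 64 * Suc j" unfolding n_def by (rule Kc_bound[OF q2])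
    hence "real ((Kc q n 1)^2) \<le> real (64 * Suc j)" by (simp only: of_nat_le_iff)
    hence "real ((Kc q n 1)^2) \<le> 64 * real (Suc j)" by simp
    hence "4 * real ((Kc q n 1)^2) + 18 \<le> 274 * real (Suc j)" by simp
    thus ?thesis using np e by (intro divide_right_mono mult_left_mono) auto
  qed
  also have "\<dots> = 274 / e^2 * (real (Suc j) / real n)" using np e by (simp add: field_simps power2_eq_square)
  also have "real (Suc j) / real n = inverse (real (Suc j)^3)"
  proof -
    have "real n = real (Suc j) ^ Suc 3" by (simp add: n_def)
    also have "\<dots> = real (Suc j) * real (Suc j)^3" by (rule power_Suc)
    finally have e: "real n = real (Suc j) * real (Suc j)^3" .
    have p: "real (Suc j) > 0" by simp
    show ?thesis unfolding e using p by (simp add: divide_inverse)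
  qed
  also have "inverse (real (Suc j)^3) \<le> inverse (real (Suc j)^2)"
  proof (rule le_imp_inverse_le)
    show "real (Suc j)^2 \<le> real (Suc j)^3" by (rule power_increasing) auto
  qed simp
  hence "274 / e^2 * inverse (real (Suc j)^3) \<le> 274 / e^2 * inverse (real (Suc j)^2)"
    using e by (intro mult_left_mono) auto
  finally show ?thesis .
qed

lemma AE_sub_dev:
  "AE x in P. (\<lambda>j. (T ((Suc j)^4) (prefix_word x ((Suc j)^4)) - aa ((Suc j)^4)) / real ((Suc j)^4)) \<longlonglongrightarrow> 0"
proof -
  interpret prob_space P by (rule probP)
  have each: "AE x in P. eventually (\<lambda>j. x \<in> space P - bad (1 / real (Suc l)) j) sequentially" for l
  proof (rule borel_cantelli_AE1)
    show "\<And>j. bad (1 / real (Suc l)) j \<in> sets P" by (rule bad_sets)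
    show "\<And>j. emeasure P (bad (1 / real (Suc l)) j) < \<infinity>" by (simp add: emeasure_eq_measure)
    show "summable (\<lambda>j. measure P (bad (1 / real (Suc l)) j))"
    proof (rule summable_comparison_test)
      have s2: "summable (\<lambda>j. inverse (real j ^ 2))" by (rule inverse_power_summable) simp
      hence "summable (\<lambda>j. inverse (real (Suc j) ^ 2))" using summable_Suc_iff[of "\<lambda>j. inverse (real j ^ 2)"] by simp
      thus "summable (\<lambda>j. 274 / (1 / real (Suc l))^2 * inverse (real (Suc j)^2))" by (rule summable_mult)
      show "\<exists>N. \<forall>n\<ge>N. norm (measure P (bad (1 / real (Suc l)) n)) \<le> 274 / (1 / real (Suc l))^2 * inverse (real (Suc n)^2)"
        using bad_measure[of "1 / real (Suc l)"] by auto
    qed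
  qed
  have "AE x in P. \<forall>l. eventually (\<lambda>j. x \<in> space P - bad (1 / real (Suc l)) j) sequentially"
    using each by (simp add: AE_all_countable)
  thus ?thesis
  proof (rule AE_mp[OF _ AE_I2], intro impI)
    fix x assume x: "x \<in> space P" and ev: "\<forall>l. eventually (\<lambda>j. x \<in> space P - bad (1 / real (Suc l)) j) sequentially"
    show "(\<lambda>j. (T ((Suc j)^4) (prefix_word x ((Suc j)^4)) - aa ((Suc j)^4)) / real ((Suc j)^4)) \<longlonglongrightarrow> 0"
      unfolding LIMSEQ_iff
    proof (intro allI impI)
      fix r :: real assume r: "r > 0"
      obtain l where l: "inverse (real (Suc l)) < r" using reals_Archimedean[OF r] by blast
      from ev[rule_format, of l] obtain N where N: "\<And>j. j \<ge> N \<Longrightarrow> x \<in> space P - bad (1 / real (Suc l)) j"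
        by (auto simp: eventually_sequentially)
      show "\<exists>no. \<forall>n\<ge>no. norm ((T ((Suc n)^4) (prefix_word x ((Suc n)^4)) - aa ((Suc n)^4)) / real ((Suc n)^4) - 0) < r"
      proof (intro exI allI impI)
        fix j assume j: "j \<ge> N"
        have "x \<notin> bad (1 / real (Suc l)) j" using N[OF j] by simp
        hence lt: "\<bar>T ((Suc j)^4) (prefix_word x ((Suc j)^4)) - aa ((Suc j)^4)\<bar> < 1 / real (Suc l) * real ((Suc j)^4)"
          using x space_P by (auto simp: bad_def)
        have np: "real ((Suc j)^4) > 0" by simp
        have "\<bar>T ((Suc j)^4) (prefix_word x ((Suc j)^4)) - aa ((Suc j)^4)\<bar> / real ((Suc j)^4) < 1 / real (Suc l)"
          using lt np by (simp add: divide_less_eq)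
        hence "\<bar>(T ((Suc j)^4) (prefix_word x ((Suc j)^4)) - aa ((Suc j)^4)) / real ((Suc j)^4)\<bar> < 1 / real (Suc l)"
          using np by (simp add: abs_div)
        thus "norm ((T ((Suc j)^4) (prefix_word x ((Suc j)^4)) - aa ((Suc j)^4)) / real ((Suc j)^4) - 0) < r"
          using l by (simp add: inverse_eq_divide)
      qed
    qed
  qed
qed

lemma AE_sub:
  "AE x in P. (\<lambda>j. T ((Suc j)^4) (prefix_word x ((Suc j)^4)) / real ((Suc j)^4)) \<longlonglongrightarrow> s_val m q \<Omega> \<mu>"
proof -
  have sm: "strict_mono (\<lambda>j::nat. (Suc j)^4)" by (rule strict_monoI) (simp add: power_strict_mono)
  have a: "(\<lambda>j. aa ((Suc j)^4) / real ((Suc j)^4)) \<longlonglongrightarrow> s_val m q \<Omega> \<mu>"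
    using LIMSEQ_subseq_LIMSEQ[OF aa_lim sm] by (simp add: comp_def)
  show ?thesis using AE_sub_dev
  proof (rule AE_mp[OF _ AE_I2], intro impI)
    fix x assume "(\<lambda>j. (T ((Suc j)^4) (prefix_word x ((Suc j)^4)) - aa ((Suc j)^4)) / real ((Suc j)^4)) \<longlonglongrightarrow> 0"
    from tendsto_add[OF this a]
    show "(\<lambda>j. T ((Suc j)^4) (prefix_word x ((Suc j)^4)) / real ((Suc j)^4)) \<longlonglongrightarrow> s_val m q \<Omega> \<mu>"
      by (simp add: diff_divide_distrib)
  qed
qed

lemma AE_pos: "AE x in P. \<forall>n. Pc (prefix_word x n) > 0"
proof -
  interpret prob_space P by (rule probP)
  have "AE x in P. Pc (prefix_word x n) > 0" for n
  proof (rule AE_I')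
    let ?N = "{x \<in> Sigma_sh m. Pc (prefix_word x n) = 0}"
    have ns: "?N \<in> sets P" using cylset_sets[OF m2] setsP by simp
    have "measure P ?N = (\<Sum>u\<in>{u\<in>words m n. Pc u = 0}. measure P (cyl m u))"
      by (rule cylset_measure[OF m2 setsP]) (rule finite_measure_axioms)
    also have "\<dots> = 0" by (simp add: Pc_def)
    finally show "?N \<in> null_sets P" using ns by (simp add: emeasure_eq_measure null_sets_def)
    show "{x \<in> space P. \<not> 0 < Pc (prefix_word x n)} \<subseteq> ?N"
      using space_P Pc_nonneg by (auto simp: less_le)
  qed
  thus ?thesis by (simp add: AE_all_countable)
qed

lemma logPc_T:
  assumes u: "u \<in> words m n" and pos: "Pc u > 0"
  shows "- log (real m) (Pc u) = T n u"
proof -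
  have pr: "Pc u = (\<Prod>i\<in>Iset q n. mu (restrJ q i u))" by (rule Pc_prod[OF u])
  have nz: "mu (restrJ q i u) \<noteq> 0" if "i \<in> Iset q n" for i
  proof
    assume "mu (restrJ q i u) = 0"
    hence "(\<Prod>i\<in>Iset q n. mu (restrJ q i u)) = 0" using that by (intro prod_zero) auto
    thus False using pos pr by linarith
  qed
  have "ln (Pc u) = (\<Sum>i\<in>Iset q n. ln (mu (restrJ q i u)))"
    unfolding pr by (rule ln_prod) (use nz in auto)
  thus ?thesis unfolding T_def phi_eq log_def by (simp add: sum_divide_distrib sum_negf)
qed

lemma AE_main: "AE x in P. (\<lambda>n. - log (real m) (measure P (cyl m (prefix_word x n))) / real n) \<longlonglongrightarrow> s_val m q \<Omega> \<mu>"
  using AE_sub AE_pos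
proof (rule AE_mp[OF _ AE_mp[OF _ AE_I2]], intro impI)
  fix x assume x: "x \<in> space P" and pos: "\<forall>n. Pc (prefix_word x n) > 0"
    and lim: "(\<lambda>j. T ((Suc j)^4) (prefix_word x ((Suc j)^4)) / real ((Suc j)^4)) \<longlonglongrightarrow> s_val m q \<Omega> \<mu>"
  have xs: "x \<in> Sigma_sh m" using x space_P by simp
  define f where "f n = - log (real m) (Pc (prefix_word x n))" for n
  have fT: "f n = T n (prefix_word x n)" for n
    unfolding f_def by (rule logPc_T[OF prefix_in_words[OF xs] pos[rule_format]])
  have mono: "f n \<le> f (Suc n)" for n
  proof -
    have "Pc (prefix_word x (Suc n)) \<le> Pc (prefix_word x n)"
      unfolding Pc_def
      by (rule finite_measure.finite_measure_mono[OF prob_space.finite_measure[OF probP] cyl_prefix_mono])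
         (auto simp: setsP cyl_sets[OF m2])
    hence "log (real m) (Pc (prefix_word x (Suc n))) \<le> log (real m) (Pc (prefix_word x n))"
      using pos m2 by (subst log_le_cancel_iff) auto
    thus ?thesis by (simp add: f_def)
  qed
  have nonneg: "0 \<le> f n" for n
  proof -
    have "Pc (prefix_word x n) \<le> 1" unfolding Pc_def by (rule prob_space.prob_le_1[OF probP])
    hence "log (real m) (Pc (prefix_word x n)) \<le> 0" using pos m2 by (simp add: log_le_zero_cancel_iff)
    thus ?thesis by (simp add: f_def)
  qed
  have "(\<lambda>n. f n / real n) \<longlonglongrightarrow> s_val m q \<Omega> \<mu>"
    by (rule sandwich_sub[where f = f]) (use mono nonneg lim in \<open>simp_all add: fT\<close>)
  thus "(\<lambda>n. - log (real m) (measure P (cyl m (prefix_word x n))) / real n) \<longlonglongrightarrow> s_val m q \<Omega> \<mu>"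
    by (simp add: f_def Pc_def)
qed

end


lemma rho_bdd: "m \<ge> 2 \<Longrightarrow> bdd_above {rho m x y | x y. x \<in> A \<and> y \<in> A}"
  using rho_le_m by (auto intro!: bdd_aboveI[of _ "real m"])

lemma sdiam_ge: "m \<ge> 2 \<Longrightarrow> x \<in> A \<Longrightarrow> y \<in> A \<Longrightarrow> rho m x y \<le> sdiam m A"
  unfolding sdiam_def by (auto intro!: cSup_upper rho_bdd)

lemma sdiam_nonneg: "m \<ge> 2 \<Longrightarrow> 0 \<le> sdiam m A"
proof (cases "A = {}")
  case True thus ?thesis by (simp add: sdiam_def)
next
  case False
  then obtain x where "x \<in> A" by blast
  assume m: "m \<ge> 2"
  have "0 \<le> rho m x x" by (simp add: rho_def)
  also have "\<dots> \<le> sdiam m A" by (rule sdiam_ge[OF m \<open>x \<in> A\<close> \<open>x \<in> A\<close>])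
  finally show ?thesis .
qed

lemma sdiam_le:
  assumes d: "d \<ge> 0" and r: "\<And>x y. x \<in> A \<Longrightarrow> y \<in> A \<Longrightarrow> rho m x y \<le> d"
  shows "sdiam m A \<le> d"
proof (cases "A = {}")
  case True thus ?thesis using d by (simp add: sdiam_def)
next
  case False
  hence ne: "{rho m x y |x y. x \<in> A \<and> y \<in> A} \<noteq> {}" by blast
  have "Sup {rho m x y |x y. x \<in> A \<and> y \<in> A} \<le> d"
    by (rule cSup_least[OF ne]) (use r in blast)
  thus ?thesis using False by (simp add: sdiam_def)
qed

lemma sdiam_cyl: "m \<ge> 2 \<Longrightarrow> sdiam m (cyl m u) \<le> real m powr (- real (length u))"
proof (rule sdiam_le)
  assume m: "m \<ge> 2"
  show "0 \<le> real m powr (- real (length u))" by simp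
  fix x y assume x: "x \<in> cyl m u" and y: "y \<in> cyl m u"
  have "\<forall>j\<in>{1..length u}. x j = y j" using x y by (auto simp: cyl_def)
  thus "rho m x y \<le> real m powr (- real (length u))"
    by (rule rho_agree_le[OF m cyl_subset[THEN subsetD, OF x] cyl_subset[THEN subsetD, OF y]])
qed

lemma sdiam_empty[simp]: "sdiam m {} = 0" by (simp add: sdiam_def)

lemma exists_small_pow:
  assumes m: "m \<ge> 2" and d: "d > 0"
  shows "\<exists>n0. real m powr (- real n0) \<le> d"
proof -
  obtain n0 :: nat where n0: "1 / d < real n0" using reals_Archimedean2 by blast
  have "real n0 < 2 ^ n0" by (simp add: less_exp)
  also have "(2::real) ^ n0 \<le> real m ^ n0" using m by (intro power_mono) auto
  finally have "1 / d < real m ^ n0" using n0 by linarith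
  hence "1 / real m ^ n0 < d" using d m by (simp add: field_simps)
  moreover have "real m powr (- real n0) = 1 / real m ^ n0" using m by (simp add: powr_minus powr_realpow divide_inverse)
  ultimately show ?thesis by (intro exI[of _ n0]) simp
qed

lemma hmeasure_zero:
  assumes m: "m \<ge> 2" and t: "t > 0"
    and cov: "\<And>\<eta> n0. \<eta> > 0 \<Longrightarrow> \<exists>S. (\<forall>n. S n \<subseteq> words m n) \<and> (\<forall>n<n0. S n = {}) \<and>
       F \<subseteq> (\<Union>n. \<Union>u\<in>S n. cyl m u) \<and>
       summable (\<lambda>n. real (card (S n)) * real m powr (- real n * t)) \<and>
       (\<Sum>n. real (card (S n)) * real m powr (- real n * t)) \<le> \<eta>"
  shows "hmeasure m t F = 0"
proof -
  have inf0: "(INF U \<in> {U :: nat \<Rightarrow> (nat \<Rightarrow> nat) set. F \<subseteq> (\<Union>i. U i) \<and> (\<forall>i. sdiam m (U i) \<le> \<delta>)}.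
       (\<Sum>i. ennreal (sdiam m (U i) powr t))) = 0" if \<delta>: "\<delta> > 0" for \<delta>
  proof (rule antisym[OF ennreal_le_epsilon zero_le])
    fix \<eta> :: real assume \<eta>: "0 < \<eta>"
    obtain n0 where n0: "real m powr (- real n0) \<le> \<delta>" using exists_small_pow[OF m \<delta>] by blast
    obtain S where S: "\<And>n. S n \<subseteq> words m n" "\<And>n. n < n0 \<Longrightarrow> S n = {}"
      "F \<subseteq> (\<Union>n. \<Union>u\<in>S n. cyl m u)"
      "summable (\<lambda>n. real (card (S n)) * real m powr (- real n * t))"
      "(\<Sum>n. real (card (S n)) * real m powr (- real n * t)) \<le> \<eta>"
      using cov[OF \<eta>, of n0] by blast
    have finS: "finite (S n)" for n using S(1) finite_words by (rule finite_subset)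
    define E where "E n = (SOME xs. set xs = S n \<and> distinct xs)" for n
    have E: "set (E n) = S n \<and> distinct (E n)" for n
      unfolding E_def by (rule someI_ex) (use finite_distinct_list[OF finS] in blast)
    have lenE: "length (E n) = card (S n)" for n using E[of n] distinct_card by metis
    define V where "V n l = (if l < length (E n) then cyl m (E n ! l) else {})" for n l
    define U where "U i = (case prod_decode i of (n, l) \<Rightarrow> V n l)" for i
    have Ud: "U (prod_encode (n, l)) = V n l" for n l by (simp add: U_def)
    have Vdiam: "sdiam m (V n l) \<le> real m powr (- real n)" for n l
    proof (cases "l < length (E n)")
      case True
      hence "E n ! l \<in> S n" using E[of n] nth_mem by blast
      hence "length (E n ! l) = n" using S(1)[of n] by (auto simp: words_def)
      thus ?thesis using True sdiam_cyl[OF m, of "E n ! l"] by (simp add: V_def)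
    next
      case False thus ?thesis by (simp add: V_def)
    qed
    have Vne: "V n l \<noteq> {} \<Longrightarrow> n \<ge> n0" for n l
    proof (rule ccontr)
      assume "V n l \<noteq> {}" "\<not> n \<ge> n0"
      hence "S n = {}" using S(2) by simp
      hence "E n = []" using E[of n] by simp
      thus False using \<open>V n l \<noteq> {}\<close> by (simp add: V_def)
    qed
    have Vsmall: "sdiam m (V n l) \<le> \<delta>" for n l
    proof (cases "V n l = {}")
      case True thus ?thesis using \<delta> by simp
    next
      case False
      hence "n \<ge> n0" by (rule Vne)
      hence "real m powr (- real n) \<le> real m powr (- real n0)" using m by (intro powr_mono) auto
      thus ?thesis using Vdiam[of n l] n0 by linarith
    qed
    have cover: "F \<subseteq> (\<Union>i. U i)"
    proof
      fix x assume "x \<in> F"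
      then obtain n u where u: "u \<in> S n" "x \<in> cyl m u" using S(3) by blast
      then obtain l where l: "l < length (E n)" "E n ! l = u" using E[of n] by (metis in_set_conv_nth)
      have "x \<in> U (prod_encode (n, l))" using u l by (simp add: Ud V_def)
      thus "x \<in> (\<Union>i. U i)" by blast
    qed
    have small: "\<forall>i. sdiam m (U i) \<le> \<delta>"
      by (auto simp: U_def Vsmall split: prod.splits)
    define c where "c n = real (card (S n)) * real m powr (- real n * t)" for n
    have inner: "(\<Sum>l. ennreal (sdiam m (V n l) powr t)) \<le> ennreal (c n)" for n
    proof -
      have "(\<Sum>l. ennreal (sdiam m (V n l) powr t)) = (\<Sum>l<length (E n). ennreal (sdiam m (V n l) powr t))"
        by (rule suminf_finite) (auto simp: V_def)
      also have "\<dots> \<le> (\<Sum>l<length (E n). ennreal (real m powr (- real n * t)))"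
      proof (rule sum_mono)
        fix l
        have "sdiam m (V n l) powr t \<le> (real m powr (- real n)) powr t"
          using Vdiam[of n l] sdiam_nonneg[OF m] t by (intro powr_mono2) auto
        also have "\<dots> = real m powr (- real n * t)" by (simp add: powr_powr)
        finally show "ennreal (sdiam m (V n l) powr t) \<le> ennreal (real m powr (- real n * t))"
          by (rule ennreal_leI)
      qed
      also have "\<dots> = ennreal (c n)"
        by (simp add: c_def lenE ennreal_of_nat_eq_real_of_nat ennreal_mult)
      finally show ?thesis .
    qed
    have "(\<Sum>i. ennreal (sdiam m (U i) powr t)) = (\<Sum>n. \<Sum>l. ennreal (sdiam m (V n l) powr t))"
    proof -
      have "(\<Sum>i. (\<lambda>(n, l). ennreal (sdiam m (V n l) powr t)) (prod_decode i)) = (\<Sum>n. \<Sum>l. ennreal (sdiam m (V n l) powr t))"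
        by (rule suminf_ennreal_2dimen) simp
      moreover have "(\<lambda>i. (\<lambda>(n, l). ennreal (sdiam m (V n l) powr t)) (prod_decode i)) = (\<lambda>i. ennreal (sdiam m (U i) powr t))"
        by (auto simp: U_def split: prod.splits)
      ultimately show ?thesis by simp
    qed
    also have "\<dots> \<le> (\<Sum>n. ennreal (c n))" by (rule suminf_le) (use inner in auto)
    also have "\<dots> = ennreal (\<Sum>n. c n)"
      by (rule suminf_ennreal2) (use S(4) in \<open>auto simp: c_def\<close>)
    also have "\<dots> \<le> ennreal \<eta>" using S(5) by (simp add: c_def ennreal_leI)
    finally have le: "(\<Sum>i. ennreal (sdiam m (U i) powr t)) \<le> ennreal \<eta>" .
    have "(INF U \<in> {U :: nat \<Rightarrow> (nat \<Rightarrow> nat) set. F \<subseteq> (\<Union>i. U i) \<and> (\<forall>i. sdiam m (U i) \<le> \<delta>)}.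
       (\<Sum>i. ennreal (sdiam m (U i) powr t))) \<le> (\<Sum>i. ennreal (sdiam m (U i) powr t))"
      by (rule INF_lower) (use cover small in blast)
    also note le
    finally show "(INF U \<in> {U :: nat \<Rightarrow> (nat \<Rightarrow> nat) set. F \<subseteq> (\<Union>i. U i) \<and> (\<forall>i. sdiam m (U i) \<le> \<delta>)}.
       (\<Sum>i. ennreal (sdiam m (U i) powr t))) \<le> 0 + ennreal \<eta>" by simp
  qed
  show ?thesis unfolding hmeasure_def using inf0 by simp
qed


lemma small_geo:
  fixes r :: real
  assumes r: "0 \<le> r" "r < 1" and \<eta>: "\<eta> > 0"
  shows "\<exists>n\<ge>n0. r ^ n \<le> \<eta>"
proof -
  have "(\<lambda>n. r ^ n) \<longlonglongrightarrow> 0" by (rule LIMSEQ_power_zero) (use r in simp)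
  hence "eventually (\<lambda>n. r ^ n < \<eta>) sequentially" using \<eta> by (rule order_tendstoD)
  then obtain N where N: "\<And>n. n \<ge> N \<Longrightarrow> r ^ n < \<eta>" by (auto simp: eventually_sequentially)
  show ?thesis using N[of "max N n0"] by (intro exI[of _ "max N n0"]) auto
qed

lemma geo_tail:
  fixes r :: real
  assumes r: "0 \<le> r" "r < 1"
  shows "summable (\<lambda>n. if n1 \<le> n then r ^ n else 0)" "(\<Sum>n. if n1 \<le> n then r ^ n else 0) = r ^ n1 / (1 - r)"
proof -
  have g: "summable (\<lambda>n. r ^ n)" by (rule summable_geometric) (use r in simp)
  show s: "summable (\<lambda>n. if n1 \<le> n then r ^ n else 0)"
    by (rule summable_comparison_test[OF _ g]) (use r in auto)
  have "(\<Sum>n. if n1 \<le> n then r ^ n else 0) = (\<Sum>n. (if n1 \<le> n + n1 then r ^ (n + n1) else 0)) + (\<Sum>i<n1. if n1 \<le> i then r ^ i else 0)"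
    by (rule suminf_split_initial_segment[OF s])
  also have "\<dots> = (\<Sum>n. r ^ n1 * r ^ n)" by (simp add: power_add mult.commute)
  also have "\<dots> = r ^ n1 * (\<Sum>n. r ^ n)" by (rule suminf_mult[OF g])
  also have "\<dots> = r ^ n1 / (1 - r)" using suminf_geometric[of r] r by simp
  finally show "(\<Sum>n. if n1 \<le> n then r ^ n else 0) = r ^ n1 / (1 - r)" .
qed

lemma pow_powr_combine:
  assumes m: "m \<ge> 2"
  shows "real m powr (- real n * t) = (real m powr (- t)) ^ n"
  using m by (simp add: powr_realpow[symmetric] powr_powr mult.commute)

lemma hmeasure_Sigma_zero:
  assumes m: "m \<ge> 2" and F: "F \<subseteq> Sigma_sh m"
  shows "hmeasure m 2 F = 0"
proof (rule hmeasure_zero[OF m])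
  fix \<eta> :: real and n0 assume \<eta>: "\<eta> > 0"
  have r: "0 \<le> real m powr (-1)" "real m powr (-1) < 1" using m by (auto simp: powr_minus field_simps)
  obtain n where n: "n \<ge> n0" "(real m powr (-1)) ^ n \<le> \<eta>" using small_geo[OF r \<eta>] by blast
  define S where "S k = (if k = n then words m n else {})" for k
  have val: "real (card (S n)) * real m powr (- real n * 2) = (real m powr (-1)) ^ n"
  proof -
    have "real (card (S n)) = real m powr real n" using m by (simp add: S_def card_words powr_realpow)
    hence "real (card (S n)) * real m powr (- real n * 2) = real m powr real n * real m powr (- real n * 2)"
      by simp
    also have "\<dots> = real m powr (real n + - real n * 2)" by (rule powr_add[symmetric])
    also have "\<dots> = real m powr (- real n * 1)" by simp
    also have "\<dots> = (real m powr (-1)) ^ n" by (rule pow_powr_combine[OF m])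
    finally show ?thesis .
  qed
  show "\<exists>S. (\<forall>n. S n \<subseteq> words m n) \<and> (\<forall>n<n0. S n = {}) \<and> F \<subseteq> (\<Union>n. \<Union>u\<in>S n. cyl m u) \<and>
       summable (\<lambda>n. real (card (S n)) * real m powr (- real n * 2)) \<and>
       (\<Sum>n. real (card (S n)) * real m powr (- real n * 2)) \<le> \<eta>"
  proof (intro exI[of _ S] conjI allI impI)
    show "\<And>k. S k \<subseteq> words m k" by (simp add: S_def)
    show "\<And>k. k < n0 \<Longrightarrow> S k = {}" using n by (simp add: S_def)
    show "F \<subseteq> (\<Union>n. \<Union>u\<in>S n. cyl m u)"
    proof
      fix x assume "x \<in> F"
      hence x: "x \<in> Sigma_sh m" using F by blast
      show "x \<in> (\<Union>n. \<Union>u\<in>S n. cyl m u)"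
        using prefix_in_words[OF x, of n] in_cyl_prefix[OF x, of n] by (auto simp: S_def)
    qed
    have fin: "\<And>k. k \<notin> {n} \<Longrightarrow> real (card (S k)) * real m powr (- real k * 2) = 0" by (simp add: S_def)
    show "summable (\<lambda>k. real (card (S k)) * real m powr (- real k * 2))"
      by (rule summable_finite[of "{n}"]) (use fin in auto)
    have "(\<Sum>k. real (card (S k)) * real m powr (- real k * 2)) = (\<Sum>k\<in>{n}. real (card (S k)) * real m powr (- real k * 2))"
      by (rule suminf_finite[OF _ fin]) simp
    also have "\<dots> = (real m powr (-1)) ^ n" using val by simp
    finally show "(\<Sum>k. real (card (S k)) * real m powr (- real k * 2)) \<le> \<eta>" using n by simp
  qed
qed simp

context PS
begin

definition F0 where
  "F0 = {x \<in> Sigma_sh m. (\<forall>n. Pc (prefix_word x n) > 0) \<and>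
      (\<lambda>n. - log (real m) (Pc (prefix_word x n)) / real n) \<longlonglongrightarrow> s_val m q \<Omega> \<mu>}"

lemma s_nonneg: "s_val m q \<Omega> \<mu> \<ge> 0"
proof -
  have "(\<lambda>n. aa n / real n) \<longlonglongrightarrow> s_val m q \<Omega> \<mu>" by (rule aa_lim)
  moreover have "aa n / real n \<ge> 0" for n by (simp add: aa_def Hk_nonneg sum_nonneg)
  ultimately show ?thesis by (intro LIMSEQ_le_const[of _ _ 0]) auto
qed

lemma F0_zero:
  assumes t: "t > s_val m q \<Omega> \<mu>"
  shows "hmeasure m t F0 = 0"
proof -
  define s where "s = s_val m q \<Omega> \<mu>"
  have tpos: "t > 0" using t s_nonneg by simp
  define \<epsilon> where "\<epsilon> = (t - s) / 2"
  have \<epsilon>: "\<epsilon> > 0" using t by (simp add: \<epsilon>_def s_def)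
  define a where "a = s + \<epsilon>"
  define r where "r = real m powr (- \<epsilon>)"
  have r: "0 \<le> r" "r < 1" using m2 \<epsilon> by (auto simp: r_def intro!: powr_less_one)
  show ?thesis
  proof (rule hmeasure_zero[OF m2 tpos])
    fix \<eta> :: real and n0 assume \<eta>: "\<eta> > 0"
    have "\<eta> * (1 - r) > 0" using \<eta> r by simp
    then obtain n1 where n1: "n1 \<ge> n0" "r ^ n1 \<le> \<eta> * (1 - r)" using small_geo[OF r] by blast
    define S where "S n = (if n1 \<le> n then {u\<in>words m n. real m powr (- real n * a) \<le> Pc u} else {})" for n
    have card_le: "real (card (S n)) \<le> real m powr (real n * a)" for n
    proof (cases "n1 \<le> n")
      case False thus ?thesis by (simp add: S_def)
    next
      case True
      have fin: "finite (S n)" using finite_words by (simp add: S_def)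
      have "real (card (S n)) * real m powr (- real n * a) = (\<Sum>u\<in>S n. real m powr (- real n * a))" by simp
      also have "\<dots> \<le> (\<Sum>u\<in>S n. Pc u)" by (rule sum_mono) (simp add: S_def True)
      also have "\<dots> \<le> (\<Sum>u\<in>words m n. Pc u)"
        by (rule sum_mono2[OF finite_words]) (auto simp: S_def Pc_nonneg)
      also have "\<dots> = 1" by (rule sum_Pc)
      finally have "real (card (S n)) * real m powr (- real n * a) \<le> 1" .
      moreover have "real m powr (- real n * a) * real m powr (real n * a) = 1"
        using m2 by (simp add: powr_add[symmetric])
      ultimately have "real (card (S n)) * real m powr (- real n * a) * real m powr (real n * a) \<le> 1 * real m powr (real n * a)"
        by (intro mult_right_mono) auto
      hence "real (card (S n)) * real m powr (- real n * a) * real m powr (real n * a) \<le> real m powr (real n * a)"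
        by simp
      thus ?thesis using \<open>real m powr (- real n * a) * real m powr (real n * a) = 1\<close> by (simp add: mult.assoc)
    qed
    have term_le: "real (card (S n)) * real m powr (- real n * t) \<le> (if n1 \<le> n then r ^ n else 0)" for n
    proof (cases "n1 \<le> n")
      case False thus ?thesis by (simp add: S_def)
    next
      case True
      have "real (card (S n)) * real m powr (- real n * t) \<le> real m powr (real n * a) * real m powr (- real n * t)"
        by (rule mult_right_mono[OF card_le]) simp
      also have "\<dots> = real m powr (- real n * \<epsilon>)"
        by (simp add: powr_add[symmetric] a_def \<epsilon>_def algebra_simps) (simp add: field_simps)
      also have "\<dots> = r ^ n" unfolding r_def by (rule pow_powr_combine[OF m2])
      finally show ?thesis using True by simp
    qed
    have summ: "summable (\<lambda>n. real (card (S n)) * real m powr (- real n * t))"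
      by (rule summable_comparison_test[OF _ geo_tail(1)[OF r, of n1]]) (use term_le in auto)
    show "\<exists>S. (\<forall>n. S n \<subseteq> words m n) \<and> (\<forall>n<n0. S n = {}) \<and> F0 \<subseteq> (\<Union>n. \<Union>u\<in>S n. cyl m u) \<and>
       summable (\<lambda>n. real (card (S n)) * real m powr (- real n * t)) \<and>
       (\<Sum>n. real (card (S n)) * real m powr (- real n * t)) \<le> \<eta>"
    proof (intro exI[of _ S] conjI allI impI)
      show "\<And>n. S n \<subseteq> words m n" by (auto simp: S_def)
      show "\<And>n. n < n0 \<Longrightarrow> S n = {}" using n1 by (simp add: S_def)
      show "summable (\<lambda>n. real (card (S n)) * real m powr (- real n * t))" by (rule summ)
      have "(\<Sum>n. real (card (S n)) * real m powr (- real n * t)) \<le> (\<Sum>n. if n1 \<le> n then r ^ n else 0)"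
        by (rule suminf_le[OF term_le summ geo_tail(1)[OF r]])
      also have "\<dots> = r ^ n1 / (1 - r)" by (rule geo_tail(2)[OF r])
      also have "\<dots> \<le> \<eta>" using n1 r by (simp add: divide_le_eq)
      finally show "(\<Sum>n. real (card (S n)) * real m powr (- real n * t)) \<le> \<eta>" .
      show "F0 \<subseteq> (\<Union>n. \<Union>u\<in>S n. cyl m u)"
      proof
        fix x assume "x \<in> F0"
        hence x: "x \<in> Sigma_sh m" and pos: "\<And>n. Pc (prefix_word x n) > 0"
          and lim: "(\<lambda>n. - log (real m) (Pc (prefix_word x n)) / real n) \<longlonglongrightarrow> s"
          by (auto simp: F0_def s_def)
        have "eventually (\<lambda>n. - log (real m) (Pc (prefix_word x n)) / real n < a) sequentially"
          using lim \<epsilon> by (intro order_tendstoD) (auto simp: a_def)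
        then obtain N where N: "\<And>n. n \<ge> N \<Longrightarrow> - log (real m) (Pc (prefix_word x n)) / real n < a"
          by (auto simp: eventually_sequentially)
        define n where "n = max N (max n1 1)"
        have nn: "n \<ge> N" "n \<ge> n1" "n \<ge> 1" by (auto simp: n_def)
        have np: "real n > 0" using nn(3) by simp
        have "- log (real m) (Pc (prefix_word x n)) / real n < a" using N[OF nn(1)] .
        hence "- log (real m) (Pc (prefix_word x n)) < a * real n"
          using np by (simp only: divide_less_eq)
        hence "- log (real m) (Pc (prefix_word x n)) < real n * a" by (simp add: mult.commute)
        hence "- (real n * a) < log (real m) (Pc (prefix_word x n))" by simp
        hence "real m powr (- (real n * a)) < real m powr (log (real m) (Pc (prefix_word x n)))"
          using m2 by simp
        hence "real m powr (- real n * a) \<le> Pc (prefix_word x n)" using pos[of n] m2 by simp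
        hence "prefix_word x n \<in> S n" using nn(2) prefix_in_words[OF x] by (simp add: S_def)
        thus "x \<in> (\<Union>n. \<Union>u\<in>S n. cyl m u)" using in_cyl_prefix[OF x, of n] by blast
      qed
    qed
  qed
qed

end


lemma lim_char:
  fixes X :: "nat \<Rightarrow> real"
  shows "X \<longlonglongrightarrow> s \<longleftrightarrow> (\<forall>l. \<exists>N. \<forall>n. N \<le> n \<longrightarrow> \<bar>X n - s\<bar> < inverse (real (Suc l)))"
proof
  assume "X \<longlonglongrightarrow> s"
  hence L: "\<And>r. r > 0 \<Longrightarrow> \<exists>no. \<forall>n\<ge>no. norm (X n - s) < r" unfolding LIMSEQ_iff by blast
  show "\<forall>l. \<exists>N. \<forall>n. N \<le> n \<longrightarrow> \<bar>X n - s\<bar> < inverse (real (Suc l))"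
  proof
    fix l show "\<exists>N. \<forall>n. N \<le> n \<longrightarrow> \<bar>X n - s\<bar> < inverse (real (Suc l))"
      using L[of "inverse (real (Suc l))"] by simp
  qed
next
  assume R: "\<forall>l. \<exists>N. \<forall>n. N \<le> n \<longrightarrow> \<bar>X n - s\<bar> < inverse (real (Suc l))"
  show "X \<longlonglongrightarrow> s" unfolding LIMSEQ_iff
  proof (intro allI impI)
    fix r :: real assume r: "r > 0"
    obtain l where l: "inverse (real (Suc l)) < r" using reals_Archimedean[OF r] by blast
    obtain N where "\<forall>n. N \<le> n \<longrightarrow> \<bar>X n - s\<bar> < inverse (real (Suc l))" using R by blast
    thus "\<exists>no. \<forall>n\<ge>no. norm (X n - s) < r" using l by (intro exI[of _ N]) auto
  qed
qed

context PS
begin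

lemma cylset_P: "{x \<in> Sigma_sh m. Q (prefix_word x n)} \<in> sets P"
  using cylset_sets[OF m2] setsP by simp

lemma countable_INT_P: "(\<And>n::nat. A n \<in> sets P) \<Longrightarrow> (\<Inter>n. A n) \<in> sets P"
proof -
  assume a: "\<And>n::nat. A n \<in> sets P"
  have "(\<Inter>n\<in>UNIV. A n) \<in> sets P" by (rule sets.countable_INT) (use a in auto)
  thus ?thesis by simp
qed

lemma countable_UN_P: "(\<And>n::nat. A n \<in> sets P) \<Longrightarrow> (\<Union>n. A n) \<in> sets P"
proof -
  assume a: "\<And>n::nat. A n \<in> sets P"
  have "(\<Union>n\<in>UNIV. A n) \<in> sets P" by (rule sets.countable_UN) (use a in auto)
  thus ?thesis by simp
qed

lemma F0_sets: "F0 \<in> sets P"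
proof -
  define g where "g n u = - log (real m) (Pc u) / real n" for n u
  define Pos where "Pos = (\<Inter>n. {x \<in> Sigma_sh m. (\<lambda>u. Pc u > 0) (prefix_word x n)})"
  define Lim where "Lim = (\<Inter>l. \<Union>N. \<Inter>n. {x \<in> Sigma_sh m. (\<lambda>u. N \<le> n \<longrightarrow> \<bar>g n u - s_val m q \<Omega> \<mu>\<bar> < inverse (real (Suc l))) (prefix_word x n)})"
  have "Pos \<in> sets P" unfolding Pos_def by (intro countable_INT_P cylset_P)
  moreover have "Lim \<in> sets P" unfolding Lim_def
    by (intro countable_INT_P countable_UN_P cylset_P)
  moreover have "F0 = Pos \<inter> Lim"
  proof (intro set_eqI)
    fix x
    show "x \<in> F0 \<longleftrightarrow> x \<in> Pos \<inter> Lim"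
    proof (cases "x \<in> Sigma_sh m")
      case True
      have L: "x \<in> Lim \<longleftrightarrow> (\<forall>l. \<exists>N. \<forall>n. N \<le> n \<longrightarrow> \<bar>g n (prefix_word x n) - s_val m q \<Omega> \<mu>\<bar> < inverse (real (Suc l)))"
        unfolding Lim_def using True by simp
      have P: "x \<in> Pos \<longleftrightarrow> (\<forall>n. Pc (prefix_word x n) > 0)"
        unfolding Pos_def using True by simp
      have "(\<lambda>n. - log (real m) (Pc (prefix_word x n)) / real n) \<longlonglongrightarrow> s_val m q \<Omega> \<mu> \<longleftrightarrow> x \<in> Lim"
        unfolding L lim_char g_def ..
      thus ?thesis using True P unfolding F0_def by blast
    next
      case False thus ?thesis unfolding F0_def Pos_def by blast
    qed
  qed
  ultimately show ?thesis by simp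
qed

lemma F0_prob: "emeasure P F0 = 1"
proof -
  interpret prob_space P by (rule probP)
  have AE: "AE x in P. x \<in> F0"
    using AE_main AE_pos
  proof (rule AE_mp[OF _ AE_mp[OF _ AE_I2]], intro impI)
    fix x assume x: "x \<in> space P" and pos: "\<forall>n. Pc (prefix_word x n) > 0"
      and lim: "(\<lambda>n. - log (real m) (measure P (cyl m (prefix_word x n))) / real n) \<longlonglongrightarrow> s_val m q \<Omega> \<mu>"
    show "x \<in> F0" using x pos lim space_P by (simp add: F0_def Pc_def)
  qed
  have cs: "space P - F0 \<in> sets P" using F0_sets by auto
  have "space P - F0 \<in> null_sets P" using AE cs by (subst AE_iff_null_sets) auto
  hence "prob (space P - F0) = 0" by (simp add: emeasure_eq_measure null_sets_def)
  hence "prob F0 = 1" using prob_compl[OF F0_sets] by simp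
  thus ?thesis by (simp add: emeasure_eq_measure)
qed

definition GG where
  "GG t' N = (\<Inter>n. {x \<in> Sigma_sh m. (\<lambda>u. N \<le> n \<longrightarrow> Pc u \<le> real m powr (- real n * t')) (prefix_word x n)})"

lemma GG_sets: "GG t' N \<in> sets P"
  unfolding GG_def by (intro countable_INT_P cylset_P)

lemma GG_mem: "x \<in> GG t' N \<Longrightarrow> N \<le> n \<Longrightarrow> Pc (prefix_word x n) \<le> real m powr (- real n * t')"
  unfolding GG_def by auto

lemma GG_sub: "GG t' N \<subseteq> Sigma_sh m" unfolding GG_def by auto

lemma AE_GG:
  assumes t': "t' < s_val m q \<Omega> \<mu>"
  shows "AE x in P. x \<in> (\<Union>N. GG t' N)"
  using AE_main AE_pos
proof (rule AE_mp[OF _ AE_mp[OF _ AE_I2]], intro impI)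
  fix x assume x: "x \<in> space P" and pos: "\<forall>n. Pc (prefix_word x n) > 0"
    and lim: "(\<lambda>n. - log (real m) (measure P (cyl m (prefix_word x n))) / real n) \<longlonglongrightarrow> s_val m q \<Omega> \<mu>"
  have xs: "x \<in> Sigma_sh m" using x space_P by simp
  have "eventually (\<lambda>n. t' < - log (real m) (Pc (prefix_word x n)) / real n) sequentially"
    using lim t' unfolding Pc_def by (rule order_tendstoD)
  then obtain N0 where N0: "\<And>n. n \<ge> N0 \<Longrightarrow> t' < - log (real m) (Pc (prefix_word x n)) / real n"
    by (auto simp: eventually_sequentially)
  define N where "N = max N0 1"
  have "x \<in> GG t' N" unfolding GG_def
  proof (safe)
    fix n assume n: "N \<le> n"
    have np: "real n > 0" using n by (simp add: N_def)
    have "t' < - log (real m) (Pc (prefix_word x n)) / real n" using N0 n by (simp add: N_def)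
    hence "t' * real n < - log (real m) (Pc (prefix_word x n))" using np by (simp only: less_divide_eq)
    hence "log (real m) (Pc (prefix_word x n)) < - real n * t'" by (simp add: mult.commute)
    hence "real m powr (log (real m) (Pc (prefix_word x n))) < real m powr (- real n * t')"
      using m2 by simp
    thus "Pc (prefix_word x n) \<le> real m powr (- real n * t')" using pos m2 by simp
  qed (rule xs)
  thus "x \<in> (\<Union>N. GG t' N)" by blast
qed

lemma exists_GG_pos:
  assumes A: "A \<in> sets P" "measure P A > 0" and t': "t' < s_val m q \<Omega> \<mu>"
  shows "\<exists>N. measure P (A \<inter> GG t' N) > 0"
proof (rule ccontr)
  interpret prob_space P by (rule probP)
  assume "\<not> (\<exists>N. measure P (A \<inter> GG t' N) > 0)"
  hence z: "\<And>N. measure P (A \<inter> GG t' N) = 0" using measure_nonneg by (metis less_eq_real_def)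
  have N1: "(\<Union>N. A \<inter> GG t' N) \<in> null_sets P"
  proof (rule null_sets_UN)
    fix N
    have "A \<inter> GG t' N \<in> sets P" using A GG_sets by auto
    thus "A \<inter> GG t' N \<in> null_sets P" using z[of N] by (simp add: emeasure_eq_measure null_sets_def)
  qed
  have us: "(\<Union>N. GG t' N) \<in> sets P" by (intro countable_UN_P GG_sets)
  have N2: "space P - (\<Union>N. GG t' N) \<in> null_sets P"
    using AE_GG[OF t'] us by (subst AE_iff_null_sets) auto
  have "A \<subseteq> (\<Union>N. A \<inter> GG t' N) \<union> (space P - (\<Union>N. GG t' N))"
    using sets.sets_into_space[OF A(1)] by blast
  moreover have "(\<Union>N. A \<inter> GG t' N) \<union> (space P - (\<Union>N. GG t' N)) \<in> null_sets P" using N1 N2 by blast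
  ultimately have "A \<in> null_sets P" using A(1) null_sets_subset by blast
  hence "measure P A = 0" by (simp add: emeasure_eq_measure null_sets_def)
  thus False using A by simp
qed

lemma cyl_of_close:
  assumes y: "y \<in> Sigma_sh m" and z: "z \<in> Sigma_sh m" and r: "rho m y z \<le> real m powr (- real n)"
  shows "z \<in> cyl m (prefix_word y n)"
proof -
  have "real m powr (- real n) < real m powr (1 - real n)" using m2 by simp
  hence "rho m y z < real m powr (1 - real n)" using r by linarith
  hence "\<forall>j\<in>{1..n}. y j = z j" by (rule rho_small_agree[OF m2 y z])
  thus ?thesis unfolding cyl_def using z by (auto simp: prefix_word_nth)
qed

lemma Pc_le_GG:
  assumes y: "y \<in> GG t' N" and n: "N \<le> n" and C: "C \<subseteq> cyl m (prefix_word y n)" "C \<in> sets P"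
  shows "measure P C \<le> real m powr (- real n * t')"
proof -
  interpret prob_space P by (rule probP)
  have "measure P C \<le> Pc (prefix_word y n)" unfolding Pc_def
    by (rule finite_measure_mono[OF C(1)]) (simp add: setsP cyl_sets[OF m2])
  also have "\<dots> \<le> real m powr (- real n * t')" by (rule GG_mem[OF y n])
  finally show ?thesis .
qed

lemma hmeasure_pos:
  assumes A: "A \<in> sets P" "measure P A > 0" "A \<subseteq> B" and t: "0 < t" "t < s_val m q \<Omega> \<mu>"
  shows "hmeasure m t B \<noteq> 0"
proof -
  interpret prob_space P by (rule probP)
  define s where "s = s_val m q \<Omega> \<mu>"
  define t' where "t' = (t + s) / 2"
  have tt': "t < t'" "t' < s" "0 < t'" using t by (auto simp: t'_def s_def)
  obtain N where N: "measure P (A \<inter> GG t' N) > 0" using exists_GG_pos[OF A(1,2)] tt' by (auto simp: s_def)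
  define A' where "A' = A \<inter> GG t' N"
  define c where "c = measure P A'"
  have c: "c > 0" using N by (simp add: c_def A'_def)
  have A'sets: "A' \<in> sets P" using A GG_sets by (auto simp: A'_def)
  have A'sub: "A' \<subseteq> Sigma_sh m" using GG_sub by (auto simp: A'_def)
  define M where "M = real m powr t'"
  have Mpos: "M > 0" using m2 by (simp add: M_def)
  define \<delta> where "\<delta> = real m powr (- real N)"
  have \<delta>: "\<delta> > 0" "\<delta> \<le> 1"
  proof -
    show "\<delta> > 0" using m2 by (simp add: \<delta>_def)
    have "real m powr (- real N) \<le> real m powr 0" by (rule powr_mono) (use m2 in auto)
    thus "\<delta> \<le> 1" using m2 by (simp add: \<delta>_def)
  qed
  have cover_bound: "ennreal (c / M) \<le> (\<Sum>i. ennreal (sdiam m (U i) powr t))"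
    if U: "B \<subseteq> (\<Union>i. U i)" "\<forall>i. sdiam m (U i) \<le> \<delta>" for U :: "nat \<Rightarrow> (nat \<Rightarrow> nat) set"
  proof -
    define d where "d i = sdiam m (U i)" for i
    have d0: "0 \<le> d i" for i using sdiam_nonneg[OF m2] by (simp add: d_def)
    have d\<delta>: "d i \<le> \<delta>" for i using U by (simp add: d_def)
    define y where "y i = (SOME y. y \<in> U i \<inter> A')" for i
    define Q where "Q i = {n. N \<le> n \<and> d i \<le> real m powr (- real n)}" for i
    define C where "C i = (if U i \<inter> A' = {} then {} else (\<Inter>n\<in>Q i. cyl m (prefix_word (y i) n)))" for i
    have NQ: "N \<in> Q i" for i using d\<delta> by (simp add: Q_def \<delta>_def)
    have Csets: "C i \<in> sets P" for i
    proof (cases "U i \<inter> A' = {}")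
      case False
      have "(\<Inter>n\<in>Q i. cyl m (prefix_word (y i) n)) \<in> sets P"
        by (rule sets.countable_INT') (use NQ in \<open>auto simp: setsP cyl_sets[OF m2]\<close>)
      thus ?thesis using False by (simp add: C_def)
    qed (simp add: C_def)
    have yprop: "y i \<in> U i \<inter> A'" if "U i \<inter> A' \<noteq> {}" for i
      unfolding y_def using that by (metis ex_in_conv someI_ex)
    have UC: "U i \<inter> A' \<subseteq> C i" for i
    proof (cases "U i \<inter> A' = {}")
      case True thus ?thesis by simp
    next
      case False
      note yi = yprop[OF False]
      show ?thesis
      proof
        fix z assume z: "z \<in> U i \<inter> A'"
        have ys: "y i \<in> Sigma_sh m" and zs: "z \<in> Sigma_sh m" using yi z A'sub by auto
        have rz: "rho m (y i) z \<le> d i" unfolding d_def using yi z by (intro sdiam_ge[OF m2]) auto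
        have "z \<in> cyl m (prefix_word (y i) n)" if "n \<in> Q i" for n
          using cyl_of_close[OF ys zs] rz that by (force simp: Q_def)
        thus "z \<in> C i" using False by (simp add: C_def)
      qed
    qed
    have Cmeas: "measure P (C i) \<le> M * d i powr t" for i
    proof (cases "U i \<inter> A' = {}")
      case True thus ?thesis using Mpos d0 by (simp add: C_def)
    next
      case False
      note yi = yprop[OF False]
      have yG: "y i \<in> GG t' N" using yi by (simp add: A'_def)
      have bnd: "measure P (C i) \<le> real m powr (- real n * t')" if "n \<in> Q i" for n
      proof (rule Pc_le_GG[OF yG _ _ Csets])
        show "N \<le> n" using that by (simp add: Q_def)
        show "C i \<subseteq> cyl m (prefix_word (y i) n)" using False that by (auto simp: C_def)
      qed
      show ?thesis
      proof (cases "d i = 0")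
        case True
        have lim: "(\<lambda>n. (real m powr (- t')) ^ n) \<longlonglongrightarrow> 0"
          by (rule LIMSEQ_power_zero) (use m2 tt' in \<open>auto intro!: powr_less_one\<close>)
        have "measure P (C i) \<le> 0"
        proof (rule LIMSEQ_le_const[OF lim], intro exI allI impI)
          fix n assume "n \<ge> N"
          hence "n \<in> Q i" using True by (simp add: Q_def)
          thus "measure P (C i) \<le> (real m powr (- t')) ^ n"
            using bnd pow_powr_combine[OF m2] by simp
        qed
        thus ?thesis using True t by simp
      next
        case False
        hence dpos: "d i > 0" using d0[of i] by simp
        define L where "L = - log (real m) (d i)"
        define n where "n = nat \<lfloor>L\<rfloor>"
        have "log (real m) (d i) \<le> log (real m) \<delta>" using dpos d\<delta>[of i] m2 by simp
        hence "L \<ge> real N" using m2 by (simp add: L_def \<delta>_def)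
        hence nN: "N \<le> n" unfolding n_def by linarith
        have nL: "real n \<le> L" "L < real n + 1" using \<open>L \<ge> real N\<close> unfolding n_def by linarith+
        have "d i = real m powr (- L)" using dpos m2 by (simp add: L_def)
        hence "d i \<le> real m powr (- real n)" using nL m2 by (simp add: powr_mono)
        hence nQ: "n \<in> Q i" using nN by (simp add: Q_def)
        have "real m powr (- real n) < real m powr (1 - L)" using nL m2 by simp
        also have "\<dots> = real m * d i"
        proof -
          have e1: "1 - L = 1 + log (real m) (d i)" by (simp add: L_def)
          have "real m powr (1 - L) = real m powr (1 + log (real m) (d i))" by (simp only: e1)
          also have "\<dots> = real m powr 1 * real m powr (log (real m) (d i))" by (rule powr_add)
          also have "\<dots> = real m * d i" using dpos m2 by simp
          finally show ?thesis .
        qed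
        finally have lt: "real m powr (- real n) \<le> real m * d i" by simp
        have "measure P (C i) \<le> real m powr (- real n * t')" by (rule bnd[OF nQ])
        also have "\<dots> = (real m powr (- real n)) powr t'" by (simp add: powr_powr)
        also have "\<dots> \<le> (real m * d i) powr t'" using lt tt' by (intro powr_mono2) auto
        also have "\<dots> = M * d i powr t'" using d0 by (simp add: M_def powr_mult)
        also have "\<dots> \<le> M * d i powr t"
        proof (rule mult_left_mono)
          have "d i \<le> 1" using d\<delta>[of i] \<delta> by simp
          thus "d i powr t' \<le> d i powr t" using tt' d0[of i] by (intro powr_mono') auto
        qed (use Mpos in simp)
        finally show ?thesis .
      qed
    qed
    have A'C: "A' \<subseteq> (\<Union>i. C i)"
    proof
      fix z assume z: "z \<in> A'"
      hence "z \<in> B" using A(3) by (auto simp: A'_def)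
      then obtain i where "z \<in> U i" using U by blast
      thus "z \<in> (\<Union>i. C i)" using UC[of i] z by blast
    qed
    have "ennreal c = emeasure P A'" by (simp add: c_def emeasure_eq_measure)
    also have "\<dots> \<le> emeasure P (\<Union>i. C i)"
      by (rule emeasure_mono[OF A'C]) (use Csets in \<open>auto intro: countable_UN_P\<close>)
    also have "\<dots> \<le> (\<Sum>i. emeasure P (C i))"
      by (rule emeasure_subadditive_countably) (use Csets in auto)
    also have "\<dots> \<le> (\<Sum>i. ennreal M * ennreal (d i powr t))"
    proof (rule suminf_le)
      fix i
      have "emeasure P (C i) = ennreal (measure P (C i))" by (simp add: emeasure_eq_measure)
      also have "\<dots> \<le> ennreal (M * d i powr t)" by (rule ennreal_leI[OF Cmeas])
      also have "\<dots> = ennreal M * ennreal (d i powr t)" using Mpos by (simp add: ennreal_mult)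
      finally show "emeasure P (C i) \<le> ennreal M * ennreal (d i powr t)" .
    qed auto
    also have "\<dots> = ennreal M * (\<Sum>i. ennreal (d i powr t))" by simp
    finally have key: "ennreal c \<le> ennreal M * (\<Sum>i. ennreal (d i powr t))" .
    show ?thesis
    proof (cases "(\<Sum>i. ennreal (d i powr t))" rule: ennreal_cases)
      case (real x)
      hence "ennreal c \<le> ennreal (M * x)" using key Mpos by (simp add: ennreal_mult)
      hence "c \<le> M * x" using real Mpos by (simp add: ennreal_le_iff)
      hence "c / M \<le> x" using Mpos by (simp add: divide_le_eq mult.commute)
      thus ?thesis using real by (simp add: d_def ennreal_leI)
    next
      case top thus ?thesis by (simp add: d_def)
    qed
  qed
  have "ennreal (c / M) \<le> (INF U \<in> {U :: nat \<Rightarrow> (nat \<Rightarrow> nat) set. B \<subseteq> (\<Union>i. U i) \<and> (\<forall>i. sdiam m (U i) \<le> \<delta>)}.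
       (\<Sum>i. ennreal (sdiam m (U i) powr t)))"
    by (rule INF_greatest) (use cover_bound in blast)
  also have "\<dots> \<le> hmeasure m t B" unfolding hmeasure_def
    by (rule SUP_upper) (use \<delta> in simp)
  finally have "ennreal (c / M) \<le> hmeasure m t B" .
  moreover have "ennreal (c / M) > 0" using c Mpos by simp
  ultimately show ?thesis by auto
qed

end


lemma cyl_take_mono:
  assumes "length v \<le> length w" "take (length v) w = v"
  shows "cyl m w \<subseteq> cyl m v"
proof
  fix z assume z: "z \<in> cyl m w"
  show "z \<in> cyl m v" unfolding cyl_def
  proof (safe)
    show "z \<in> Sigma_sh m" using z by (simp add: cyl_def)
    fix j assume j: "j \<in> {1..length v}"
    hence "j \<in> {1..length w}" using assms(1) by simp
    hence "z j = w ! (j - 1)" using z by (simp add: cyl_def)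
    also have "\<dots> = take (length v) w ! (j - 1)"
    proof -
      have "j - 1 < length v" using j by auto
      thus ?thesis by simp
    qed
    also have "\<dots> = v ! (j - 1)" using assms(2) by simp
    finally show "z j = v ! (j - 1)" .
  qed
qed

context PS
begin

lemma dimH_ge:
  assumes A: "A \<in> sets P" "measure P A > 0" "A \<subseteq> B" and B: "B \<subseteq> Sigma_sh m"
  shows "dimH m B \<ge> s_val m q \<Omega> \<mu>"
  unfolding dimH_def
proof (rule cInf_greatest)
  show "{s. 0 < s \<and> hmeasure m s B = 0} \<noteq> {}"
    using hmeasure_Sigma_zero[OF m2 B] by (intro ex_in_conv[THEN iffD1] exI[of _ 2]) simp
  fix t assume t: "t \<in> {s. 0 < s \<and> hmeasure m s B = 0}"
  show "s_val m q \<Omega> \<mu> \<le> t"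
  proof (rule ccontr)
    assume "\<not> s_val m q \<Omega> \<mu> \<le> t"
    hence lt: "t < s_val m q \<Omega> \<mu>" by simp
    have "0 < t" using t by simp
    hence "hmeasure m t B \<noteq> 0" using hmeasure_pos[OF A _ lt] by simp
    thus False using t by simp
  qed
qed

lemma dimH_F0_le: "dimH m F0 \<le> s_val m q \<Omega> \<mu>"
  unfolding dimH_def
proof (rule dense_ge)
  fix t assume t: "s_val m q \<Omega> \<mu> < t"
  have "t \<in> {s. 0 < s \<and> hmeasure m s F0 = 0}"
    using F0_zero[OF t] s_nonneg t by simp
  thus "Inf {s. 0 < s \<and> hmeasure m s F0 = 0} \<le> t"
    by (rule cInf_lower) (auto intro!: bdd_belowI[of _ 0])
qed

lemma F0_sub: "F0 \<subseteq> Sigma_sh m" by (auto simp: F0_def)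

lemma F0_measure: "measure P F0 = 1"
proof -
  interpret prob_space P by (rule probP)
  show ?thesis using F0_prob by (simp add: emeasure_eq_measure)
qed

lemma dimH_measure_eq: "dimH_measure m P = s_val m q \<Omega> \<mu>"
proof -
  define D where "D = {dimH m F |F. F \<in> sets (borel_Sigma m) \<and> emeasure P F = 1}"
  have F0D: "dimH m F0 \<in> D" unfolding D_def using F0_sets F0_prob setsP by auto
  have lower: "s_val m q \<Omega> \<mu> \<le> d" if dD: "d \<in> D" for d
  proof -
    obtain F where F: "d = dimH m F" "F \<in> sets (borel_Sigma m)" "emeasure P F = 1"
      using dD unfolding D_def by blast
    have FP: "F \<in> sets P" using F setsP by simp
    have "measure P F = 1" using F(3) finite_measure.emeasure_eq_measure[OF prob_space.finite_measure[OF probP]] by simp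
    moreover have "F \<subseteq> Sigma_sh m" using sets.sets_into_space[OF FP] space_P by simp
    ultimately show ?thesis using dimH_ge[OF FP _ order_refl] F(1) by simp
  qed
  have "Inf D \<le> dimH m F0" by (rule cInf_lower[OF F0D]) (use lower in \<open>auto intro!: bdd_belowI\<close>)
  also have "\<dots> \<le> s_val m q \<Omega> \<mu>" by (rule dimH_F0_le)
  finally have "Inf D \<le> s_val m q \<Omega> \<mu>" .
  moreover have "s_val m q \<Omega> \<mu> \<le> Inf D" by (rule cInf_greatest) (use F0D lower in auto)
  ultimately show ?thesis unfolding dimH_measure_def D_def[symmetric] by simp
qed

lemma F0_sub_X: "F0 \<subseteq> X_Omega m q \<Omega>"
proof
  fix x assume "x \<in> F0"
  hence x: "x \<in> Sigma_sh m" and pos: "\<And>n. Pc (prefix_word x n) > 0" by (auto simp: F0_def)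
  show "x \<in> X_Omega m q \<Omega>" unfolding X_Omega_def
  proof (safe)
    show "x \<in> Sigma_sh m" by (rule x)
    fix i :: nat assume i1: "1 \<le> i" and ndvd: "\<not> q dvd i"
    define y where "y = (\<lambda>l. if l = 0 then 0 else x (i * q ^ (l - 1)))"
    show "y \<in> \<Omega>"
    proof (rule ccontr)
      assume ny: "y \<notin> \<Omega>"
      have ys: "y \<in> Sigma_sh m" using x by (auto simp: y_def Sigma_sh_def)
      have op: "Sopen m (Sigma_sh m - \<Omega>)" using \<Omega>cl by (simp add: Sclosed_def)
      obtain e where e: "e > 0" "\<And>z. z \<in> Sigma_sh m \<Longrightarrow> rho m y z < e \<Longrightarrow> z \<in> Sigma_sh m - \<Omega>"
        using op ys ny unfolding Sopen_def by blast
      obtain r where r: "real m powr (- real r) \<le> e / 2" using exists_small_pow[OF m2, of "e/2"] e by auto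
      have disj: "\<Omega> \<inter> cyl m (prefix_word y r) = {}"
      proof (rule ccontr)
        assume "\<Omega> \<inter> cyl m (prefix_word y r) \<noteq> {}"
        then obtain z where z: "z \<in> \<Omega>" "z \<in> cyl m (prefix_word y r)" by blast
        have zs: "z \<in> Sigma_sh m" using z by (simp add: cyl_def)
        have "\<forall>j\<in>{1..r}. y j = z j"
        proof
          fix j assume j: "j \<in> {1..r}"
          have "z j = prefix_word y r ! (j - 1)" using z j by (simp add: cyl_def)
          also have "\<dots> = y j" using j by (subst prefix_word_nth) auto
          finally show "y j = z j" by simp
        qed
        hence "rho m y z \<le> real m powr (- real r)" by (rule rho_agree_le[OF m2 ys zs])
        hence "rho m y z < e" using r e by linarith
        hence "z \<in> Sigma_sh m - \<Omega>" by (rule e(2)[OF zs])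
        thus False using z by simp
      qed
      define n where "n = i * q ^ r"
      have qr: "q ^ r * i \<le> n" by (simp add: n_def mult.commute)
      have rK: "r < Kc q n i" using Kc_le_iff[OF q2 i1] qr by blast
      define w where "w = restrJ q i (prefix_word x n)"
      have w: "w = map (\<lambda>k. prefix_word x n ! (q ^ k * i - 1)) [0..<Kc q n i]"
        unfolding w_def restrJ_eq[OF q2 i1] by simp
      have lw: "length (prefix_word y r) \<le> length w" using rK w by simp
      have tw: "take (length (prefix_word y r)) w = prefix_word y r"
      proof (rule nth_equalityI)
        show "length (take (length (prefix_word y r)) w) = length (prefix_word y r)" using lw by simp
        fix k assume k: "k < length (take (length (prefix_word y r)) w)"
        hence kr: "k < r" by simp
        have le: "q ^ k * i \<le> n" using Kc_le_iff[OF q2 i1, of k n] rK kr by simp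
        have ge: "q ^ k * i \<ge> 1" using i1 q2 by simp
        have "take (length (prefix_word y r)) w ! k = w ! k" using kr by simp
        also have "\<dots> = prefix_word x n ! (q ^ k * i - 1)" using w kr rK by simp
        also have "\<dots> = x (q ^ k * i)"
        proof -
          have lt: "q ^ k * i - 1 < n" using le ge by linarith
          have "prefix_word x n ! (q ^ k * i - 1) = x (q ^ k * i - 1 + 1)" by (rule prefix_word_nth[OF lt])
          also have "q ^ k * i - 1 + 1 = q ^ k * i" using ge by linarith
          finally show ?thesis .
        qed
        also have "\<dots> = y (k + 1)" by (simp add: y_def mult.commute)
        also have "\<dots> = prefix_word y r ! k" using kr by (simp add: prefix_word_nth)
        finally show "take (length (prefix_word y r)) w ! k = prefix_word y r ! k" .
      qed
      have "mu w \<le> measure \<mu> (cyl m (prefix_word y r))"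
        unfolding mu_def
        by (rule finite_measure.finite_measure_mono[OF prob_space.finite_measure[OF prob\<mu>] cyl_take_mono[OF lw tw] cyl_mu_sets])
      also have "\<dots> = measure \<mu> (\<Omega> \<inter> cyl m (prefix_word y r))" using mu_Omega by (simp add: mu_def)
      also have "\<dots> = 0" using disj by simp
      finally have w0: "mu w = 0" using mu_nonneg[of w] by simp
      have iI: "i \<in> Iset q n"
      proof -
        have "i \<le> n" using qr q2 by (metis le_trans mult_le_mono1 mult_1 one_le_power order.trans one_le_numeral)
        thus ?thesis using i1 ndvd by (simp add: Iset_def)
      qed
      have "Pc (prefix_word x n) = (\<Prod>i\<in>Iset q n. mu (restrJ q i (prefix_word x n)))"
        by (rule Pc_prod[OF prefix_in_words[OF x]])
      also have "\<dots> = 0" using iI w0 by (intro prod_zero) (auto simp: w_def)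
      finally show False using pos[of n] by simp
    qed
  qed
qed

lemma dimH_X: "dimH m (X_Omega m q \<Omega>) \<ge> s_val m q \<Omega> \<mu>"
proof (rule dimH_ge[OF F0_sets _ F0_sub_X])
  show "measure P F0 > 0" using F0_measure by simp
  show "X_Omega m q \<Omega> \<subseteq> Sigma_sh m" by (auto simp: X_Omega_def)
qed

end

theorem proposition2p3:
  fixes m q :: nat and \<Omega> :: "(nat \<Rightarrow> nat) set"
    and \<mu> P :: "(nat \<Rightarrow> nat) measure"
  assumes "m \<ge> 2" and "q \<ge> 2"
    and "\<Omega> \<noteq> {}" and "Sclosed m \<Omega>"
    and "prob_space \<mu>" and "sets \<mu> = sets (borel_Sigma m)" and "emeasure \<mu> \<Omega> = 1"
    and "prob_space P" and "sets P = sets (borel_Sigma m)"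
    and "\<And>u. u \<in> words m (length u) \<Longrightarrow>
           measure P (cyl m u) =
             (\<Prod>i\<in>{i\<in>{1..length u}. \<not> q dvd i}. measure \<mu> (cyl m (restrJ q i u)))"
  shows "(AE x in P. (\<lambda>n. - log (real m) (measure P (cyl m (prefix_word x n))) / real n)
            \<longlonglongrightarrow> s_val m q \<Omega> \<mu>) \<and>
         dimH_measure m P = s_val m q \<Omega> \<mu> \<and>
         dimH m (X_Omega m q \<Omega>) \<ge> s_val m q \<Omega> \<mu>"
proof -
  interpret PS m q \<Omega> \<mu> P
    by (intro PS.intro) (fact assms)+
  show ?thesis using AE_main dimH_measure_eq dimH_X by simp
qed


end
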